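(* Let $r,s$ be positive integers, $1\le e<s$, and let $S\subseteq[F]^{r,s}$ be $e$-superlarge. Let $\sigma_1,\dots,\sigma_p$ be finitely many sentences of type $\Sigma_1^*(\mathrm{iv})$ such that every $c_{ij}$ occurring in them satisfies $i\le s$ and $j\le r$, and with $\iota(\sigma_1)=\dots=\iota(\sigma_p)=e'>e$. Then there is an $e'$-superlarge set $S'\subseteq S$ such that $M\models\sigma_1(\mathbf{a})\wedge\dots\wedge\sigma_p(\mathbf{a})$ for every $\mathbf{a}\in S'$.
   Context: $\mathcal{L}$ is a countable first-order language containing a binary symbol $<$; $\mathcal{L}^S$ is $\mathcal{L}$ with Skolem function symbols, $T_{\mathrm{skolem}}$ the theory saying they are Skolem functions; "term" means $\mathcal{L}^S$-term. $\theta$ is a strongly inaccessible cardinal and $M$ is a model of $T_{\mathrm{skolem}}$ whose $\mathcal{L}$-reduct is a $\theta$-like model (cardinality $\theta$, every proper initial segment of cardinality $<\theta$) of a complete $\mathcal{L}$-theory $T$ in which $<$ is a linear order. Fix a chain $\langle M_i;i<\theta\rangle$ of $\mathcal{L}^S$-elementary submodels of $M$, each a proper initial segment of $M$, with $M_j$ an elementary end extension of $M_i$ for $i<j$, $M_\delta=\bigcup_{i<\delta}M_i$ for limit $\delta$, and $M=\bigcup_{i<\theta}M_i$. $F:M\to\theta$, $F(a)=$ least $i$ with $a\in M_i$. For $X\subseteq M$, $[X]^r$ is the set of strictly increasing $r$-sequences from $X$, and $[X]^\mu$ the set of subsets of $X$ of cardinality $\mu$. $[F]^{r,s}$ is the set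 of $\mathbf{x}=\langle\mathbf{x}_1,\dots,\mathbf{x}_s\rangle$ with $\mathbf{x}_i=\langle x_{i1},\dots,x_{ir}\rangle\in[M]^r$, $F(x_{ij})=F(x_{il})$ for all $i,j,l$, and $F(x_{11})<F(x_{21})<\dots<F(x_{s1})$. For $A\subseteq M$, $[F|A]^{r,s}=\{\mathbf{x}\in[F]^{r,s}: \text{all }x_{ij}\in A\}$. Game $G(S,e)$ for $S\subseteq[F]^{r,s}$, $1\le e\le s$, $f=s-e$: for $k=1,\dots,e$, player I chooses a cardinal $\mu_k<\theta$ and then II responds; for $k<e$ II chooses an ordinal $\beta_k<\theta$, and at his last move II chooses a sequence of ordinals $\langle\beta_{e+i};i<\theta\rangle$ below $\theta$ (with $i=0$ giving $\beta_e$). II wins iff $\beta_1<\dots<\beta_e<\beta_{e+1}<\dots$ and there are $X_k\in[F^{-1}(\beta_k)]^{\mu_k}$ ($1\le k\le e$) and $X_{e+i}\subseteq F^{-1}(\beta_{e+i})$ ($1\le i<\theta$) with $\sup\{|X_{e+i}|:1\le i<\theta\}=\theta$ and $\prod_{k=1}^e[X_k]^r\times[F|\bigcup_{1\le i<\theta}X_{e+i}]^{r,f}\subseteq S$ (for $f=0$ this reads $\prod_{k=1}^e[X_k]^r\subseteq S$). $S$ is $e$-superlarge iff II has a winning strategy in $G(S,e)$. $C^*=\{c_{ij}\mid i,j<\omega\}$ are new constants. A sentence of type $\Sigma_1^*(\mathrm{iv})$ is one of the form: if $\tau(c_{i_1j_1},\dots,c_{i_nj_n})<c_{(i_n-1)j}$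 then $\tau(\bar c,c_{i_{q+1}j_{q+1}},\dots,c_{i_nj_n})=\tau(\bar c,c_{ul_1},\dots,c_{ul_{n-q}})$, where $\tau$ is a term, the constants are from $C^*$, $c_{i_1j_1},\dots,c_{i_nj_n}$ are strictly increasing lexicographically, $i_n>1$, $u\ge i_n$, $j,l_1,\dots,l_{n-q}$ arbitrary (with $c_{ul_1},\dots,c_{ul_{n-q}}$ increasing), $q$ the greatest integer with $i_q\ne i_n$ ($q=0$ if none) and $\bar c=\langle c_{i_1j_1},\dots,c_{i_qj_q}\rangle$. For such $\sigma$, $\iota(\sigma)=i_n$. For $\mathbf{a}\in[F]^{r,s}$, $M\models\sigma(\mathbf{a})$ means $\sigma$ holds in $M$ when each $c_{ij}$ occurring in $\sigma$ is replaced by $a_{ij}$. *)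

theory Defs
  imports Main "HOL-Library.Countable_Set"
begin

unbundle cardinal_syntax

text \<open>The universe of the model M is the whole type 'm; a structure is given by
  fI (functions) and pI (relations); arities are ar / par.\<close>

datatype ('f,'v) trm = V 'v | Fn 'f "('f,'v) trm list"

datatype ('f,'p) fm = Eq "('f,nat) trm" "('f,nat) trm" | Rel 'p "('f,nat) trm list"
  | Neg "('f,'p) fm" | Conj "('f,'p) fm" "('f,'p) fm" | Ex nat "('f,'p) fm"

fun tval :: "('f \<Rightarrow> 'm list \<Rightarrow> 'm) \<Rightarrow> ('v \<Rightarrow> 'm) \<Rightarrow> ('f,'v) trm \<Rightarrow> 'm" where
  "tval fI v (V x) = v x"
| "tval fI v (Fn f ts) = fI f (map (tval fI v) ts)"

fun tvars :: "('f,'v) trm \<Rightarrow> 'v set" where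
  "tvars (V x) = {x}"
| "tvars (Fn f ts) = (\<Union>t\<in>set ts. tvars t)"

fun twf :: "('f \<Rightarrow> nat) \<Rightarrow> ('f \<Rightarrow> bool) \<Rightarrow> ('f,'v) trm \<Rightarrow> bool" where
  "twf ar P (V x) = True"
| "twf ar P (Fn f ts) = (P f \<and> length ts = ar f \<and> (\<forall>t\<in>set ts. twf ar P t))"

fun fwf :: "('f \<Rightarrow> nat) \<Rightarrow> ('p \<Rightarrow> nat) \<Rightarrow> ('f \<Rightarrow> bool) \<Rightarrow> ('f,'p) fm \<Rightarrow> bool" where
  "fwf ar par P (Eq t1 t2) = (twf ar P t1 \<and> twf ar P t2)"
| "fwf ar par P (Rel p ts) = (length ts = par p \<and> (\<forall>t\<in>set ts. twf ar P t))"
| "fwf ar par P (Neg \<phi>) = fwf ar par P \<phi>"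
| "fwf ar par P (Conj \<phi> \<psi>) = (fwf ar par P \<phi> \<and> fwf ar par P \<psi>)"
| "fwf ar par P (Ex x \<phi>) = fwf ar par P \<phi>"

fun fvars :: "('f,'p) fm \<Rightarrow> nat set" where
  "fvars (Eq t1 t2) = tvars t1 \<union> tvars t2"
| "fvars (Rel p ts) = (\<Union>t\<in>set ts. tvars t)"
| "fvars (Neg \<phi>) = fvars \<phi>"
| "fvars (Conj \<phi> \<psi>) = fvars \<phi> \<union> fvars \<psi>"
| "fvars (Ex x \<phi>) = fvars \<phi> - {x}"

text \<open>satisfaction in the substructure with domain D (quantifiers range over D)\<close>
fun sat :: "('f \<Rightarrow> 'm list \<Rightarrow> 'm) \<Rightarrow> ('p \<Rightarrow> 'm list \<Rightarrow> bool) \<Rightarrow> 'm set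
            \<Rightarrow> (nat \<Rightarrow> 'm) \<Rightarrow> ('f,'p) fm \<Rightarrow> bool" where
  "sat fI pI D v (Eq t1 t2) = (tval fI v t1 = tval fI v t2)"
| "sat fI pI D v (Rel p ts) = pI p (map (tval fI v) ts)"
| "sat fI pI D v (Neg \<phi>) = (\<not> sat fI pI D v \<phi>)"
| "sat fI pI D v (Conj \<phi> \<psi>) = (sat fI pI D v \<phi> \<and> sat fI pI D v \<psi>)"
| "sat fI pI D v (Ex x \<phi>) = (\<exists>a\<in>D. sat fI pI D (v(x := a)) \<phi>)"

text \<open>N is (the domain of) an L^S-elementary substructure of N' (both substructures of M)\<close>
definition elem_in :: "('f \<Rightarrow> nat) \<Rightarrow> ('p \<Rightarrow> nat) \<Rightarrow> ('f \<Rightarrow> 'm list \<Rightarrow> 'm)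
     \<Rightarrow> ('p \<Rightarrow> 'm list \<Rightarrow> bool) \<Rightarrow> 'm set \<Rightarrow> 'm set \<Rightarrow> bool" where
  "elem_in ar par fI pI N N' \<longleftrightarrow> N \<noteq> {} \<and> N \<subseteq> N' \<and>
     (\<forall>f xs. set xs \<subseteq> N \<and> length xs = ar f \<longrightarrow> fI f xs \<in> N) \<and>
     (\<forall>\<phi> v. fwf ar par (\<lambda>_. True) \<phi> \<and> range v \<subseteq> N \<longrightarrow>
        (sat fI pI N v \<phi> \<longleftrightarrow> sat fI pI N' v \<phi>))"

text \<open>The strongly inaccessible cardinal \<theta> is represented by a well-ordered type 'k of
  order type \<theta>: the elements of 'k are the ordinals below \<theta>.\<close>
definition theta_inaccessible :: "'k::wellorder itself \<Rightarrow> bool" where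
  "theta_inaccessible _ \<longleftrightarrow>
     (\<forall>m::'k. (card_of ({x. x < m})) <o (card_of (UNIV::'k set))) \<and>
     (card_of (UNIV::nat set)) <o (card_of (UNIV::'k set)) \<and>
     (\<forall>A::'k set. (card_of (A)) <o (card_of (UNIV::'k set)) \<longrightarrow> (\<exists>m. \<forall>x\<in>A. x < m)) \<and>
     (\<forall>m::'k. (card_of (Pow {x. x < m})) <o (card_of (UNIV::'k set)))"

definition kzero :: "'k::wellorder" where "kzero = (LEAST x. True)"

definition is_limit :: "'k::wellorder \<Rightarrow> bool" where
  "is_limit d \<longleftrightarrow> (\<exists>i. i < d) \<and> (\<forall>i<d. \<exists>j. i < j \<and> j < d)"

definition Lformula :: "('f \<Rightarrow> nat) \<Rightarrow> ('p \<Rightarrow> nat) \<Rightarrow> ('f \<Rightarrow> bool) \<Rightarrow> ('f,'p) fm \<Rightarrow> bool" where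
  "Lformula ar par isL \<phi> \<longleftrightarrow> fwf ar par isL \<phi>"

definition lessM :: "('p \<Rightarrow> 'm list \<Rightarrow> bool) \<Rightarrow> 'p \<Rightarrow> 'm \<Rightarrow> 'm \<Rightarrow> bool" where
  "lessM pI lt a b \<longleftrightarrow> pI lt [a, b]"

definition downclosed :: "('m \<Rightarrow> 'm \<Rightarrow> bool) \<Rightarrow> 'm set \<Rightarrow> bool" where
  "downclosed lss I \<longleftrightarrow> (\<forall>a\<in>I. \<forall>b. lss b a \<longrightarrow> b \<in> I)"

text \<open>All standing assumptions: countable L (function symbols isL, all relation symbols),
  binary symbol lt; L^S = L plus one Skolem symbol sk \<phi> n for each L-formula \<phi> with
  free variables among 0..n (witness variable 0, parameters 1..n); M |= T_skolem;
  the L-reduct is \<theta>-like with < a linear order; the elementary chain Mi.\<close>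
definition setting :: "('f \<Rightarrow> nat) \<Rightarrow> ('p \<Rightarrow> nat) \<Rightarrow> ('f \<Rightarrow> bool)
   \<Rightarrow> (('f,'p) fm \<Rightarrow> nat \<Rightarrow> 'f) \<Rightarrow> 'p \<Rightarrow> ('f \<Rightarrow> 'm list \<Rightarrow> 'm) \<Rightarrow> ('p \<Rightarrow> 'm list \<Rightarrow> bool)
   \<Rightarrow> ('k::wellorder \<Rightarrow> 'm set) \<Rightarrow> bool" where
  "setting ar par isL sk lt fI pI Mi \<longleftrightarrow>
     theta_inaccessible TYPE('k) \<and>
     countable {f. isL f} \<and> countable (UNIV::'p set) \<and> par lt = 2 \<and>
     (\<forall>\<phi> n. Lformula ar par isL \<phi> \<and> fvars \<phi> \<subseteq> {0..n} \<longrightarrow>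
        \<not> isL (sk \<phi> n) \<and> ar (sk \<phi> n) = n \<and>
        (\<forall>v. (\<exists>a. sat fI pI UNIV (v(0 := a)) \<phi>) \<longrightarrow>
             sat fI pI UNIV (v(0 := fI (sk \<phi> n) (map v [1..<Suc n]))) \<phi>)) \<and>
     inj_on (\<lambda>(\<phi>, n). sk \<phi> n) {(\<phi>, n). Lformula ar par isL \<phi> \<and> fvars \<phi> \<subseteq> {0..n}} \<and>
     (\<forall>f. \<not> isL f \<longrightarrow> (\<exists>\<phi> n. Lformula ar par isL \<phi> \<and> fvars \<phi> \<subseteq> {0..n} \<and> f = sk \<phi> n)) \<and>
     (\<forall>a. \<not> lessM pI lt a a) \<and>
     (\<forall>a b c. lessM pI lt a b \<and> lessM pI lt b c \<longrightarrow> lessM pI lt a c) \<and>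
     (\<forall>a b. lessM pI lt a b \<or> a = b \<or> lessM pI lt b a) \<and>
     (card_of (UNIV::'m set)) =o (card_of (UNIV::'k set)) \<and>
     (\<forall>I. I \<noteq> UNIV \<and> downclosed (lessM pI lt) I \<longrightarrow> (card_of (I)) <o (card_of (UNIV::'k set))) \<and>
     (\<forall>i. elem_in ar par fI pI (Mi i) UNIV) \<and>
     (\<forall>i. Mi i \<noteq> UNIV \<and> downclosed (lessM pI lt) (Mi i)) \<and>
     (\<forall>i j. i < j \<longrightarrow> elem_in ar par fI pI (Mi i) (Mi j) \<and>
            (\<forall>a\<in>Mi i. \<forall>b\<in>Mi j - Mi i. lessM pI lt a b)) \<and>
     (\<forall>d. is_limit d \<longrightarrow> Mi d = (\<Union>i\<in>{i. i < d}. Mi i)) \<and>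
     (\<Union>i. Mi i) = UNIV"

definition Fk :: "('k::wellorder \<Rightarrow> 'm set) \<Rightarrow> 'm \<Rightarrow> 'k" where
  "Fk Mi a = (LEAST i. a \<in> Mi i)"

definition incr :: "('m \<Rightarrow> 'm \<Rightarrow> bool) \<Rightarrow> nat \<Rightarrow> 'm set \<Rightarrow> 'm list set" where
  "incr lss r X = {xs. length xs = r \<and> set xs \<subseteq> X \<and> sorted_wrt lss xs}"

text \<open>[F|A]^{r,s}; [F]^{r,s} is Fseqs lss F r s UNIV.  An element is a list of s blocks,
  block i (0-based) being the list x_{i+1,1},...,x_{i+1,r}.\<close>
definition Fseqs :: "('m \<Rightarrow> 'm \<Rightarrow> bool) \<Rightarrow> ('m \<Rightarrow> 'k::wellorder) \<Rightarrow> nat \<Rightarrow> nat \<Rightarrow> 'm set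
     \<Rightarrow> 'm list list set" where
  "Fseqs lss F r s A = {x. length x = s \<and>
      (\<forall>b\<in>set x. b \<in> incr lss r A \<and> (\<forall>y\<in>set b. F y = F (hd b))) \<and>
      sorted_wrt (\<lambda>b c. F (hd b) < F (hd c)) x}"

text \<open>Player I's moves are cardinals
  below \<theta>, each represented by an ordinal m < \<theta> standing for the cardinal |{x. x < m}|
  (mus ! k is \<mu>_(k+1)).  beta k is \<beta>_(k+1) for k < e, and T is II's last move,
  T kzero = \<beta>_e and T i = \<beta>_(e+i) for i \<noteq> 0.\<close>
definition game_win :: "('m \<Rightarrow> 'm \<Rightarrow> bool) \<Rightarrow> ('m \<Rightarrow> 'k::wellorder) \<Rightarrow> nat \<Rightarrow> nat \<Rightarrow> nat
     \<Rightarrow> 'm list list set \<Rightarrow> 'k list \<Rightarrow> (nat \<Rightarrow> 'k) \<Rightarrow> ('k \<Rightarrow> 'k) \<Rightarrow> bool" where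
  "game_win lss F r s e S mus beta T \<longleftrightarrow>
     (\<forall>k. Suc k < e \<longrightarrow> beta k < beta (Suc k)) \<and> beta (e - 1) = T kzero \<and> strict_mono T \<and>
     (\<exists>X Y.
        (\<forall>k<e. X k \<subseteq> {a. F a = beta k} \<and> (card_of (X k)) =o (card_of ({x. x < mus ! k}))) \<and>
        (\<forall>i. i \<noteq> kzero \<longrightarrow> Y i \<subseteq> {a. F a = T i}) \<and>
        (\<forall>m::'k. \<exists>i. i \<noteq> kzero \<and> (card_of ({x. x < m})) \<le>o (card_of (Y i))) \<and>
        {xs @ ys | xs ys. length xs = e \<and> (\<forall>k<e. xs ! k \<in> incr lss r (X k)) \<and>
            ys \<in> Fseqs lss F r (s - e) (\<Union>i\<in>{i. i \<noteq> kzero}. Y i)} \<subseteq> S)"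

text \<open>II has a winning strategy: st gives \<beta>_k (k<e) from \<mu>_1..\<mu>_k, fin gives the final
  sequence from \<mu>_1..\<mu>_e.\<close>
definition II_wins :: "('m \<Rightarrow> 'm \<Rightarrow> bool) \<Rightarrow> ('m \<Rightarrow> 'k::wellorder) \<Rightarrow> nat \<Rightarrow> nat \<Rightarrow> nat
     \<Rightarrow> 'm list list set \<Rightarrow> bool" where
  "II_wins lss F r s e S \<longleftrightarrow>
     (\<exists>st fin. \<forall>mus. length mus = e \<longrightarrow>
        game_win lss F r s e S mus
          (\<lambda>k. if Suc k < e then st (take (Suc k) mus) else fin mus kzero) (fin mus))"

definition superlarge :: "('m \<Rightarrow> 'm \<Rightarrow> bool) \<Rightarrow> ('m \<Rightarrow> 'k::wellorder) \<Rightarrow> nat \<Rightarrow> nat \<Rightarrow> nat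
     \<Rightarrow> 'm list list set \<Rightarrow> bool" where
  "superlarge lss F r s e S \<longleftrightarrow>
     S \<subseteq> Fseqs lss F r s UNIV \<and> 1 \<le> e \<and> e \<le> s \<and> II_wins lss F r s e S"

text \<open>A sentence is (\<tau>, cs, j, u, ls): \<tau> a term in variables 0..n-1 (variable k stands for the
  k-th constant argument), cs = [(i_1,j_1),...,(i_n,j_n)] the constants c_{i_1 j_1},...,
  ls = [l_1,...,l_{n-q}].\<close>
type_synonym 'f sent = "('f,nat) trm \<times> (nat \<times> nat) list \<times> nat \<times> nat \<times> nat list"

definition lexless :: "nat \<times> nat \<Rightarrow> nat \<times> nat \<Rightarrow> bool" where
  "lexless p p' \<longleftrightarrow> fst p < fst p' \<or> (fst p = fst p' \<and> snd p < snd p')"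

text \<open>q (1-based): greatest q with i_q \<noteq> i_n, 0 if none\<close>
definition qidx :: "(nat \<times> nat) list \<Rightarrow> nat" where
  "qidx cs = (if \<exists>k<length cs. fst (cs ! k) \<noteq> fst (last cs)
              then Suc (GREATEST k. k < length cs \<and> fst (cs ! k) \<noteq> fst (last cs)) else 0)"

definition is_sigma :: "('f \<Rightarrow> nat) \<Rightarrow> 'f sent \<Rightarrow> bool" where
  "is_sigma ar \<sigma> = (case \<sigma> of (\<tau>, cs, j, u, ls) \<Rightarrow>
     cs \<noteq> [] \<and> twf ar (\<lambda>_. True) \<tau> \<and> tvars \<tau> \<subseteq> {..<length cs} \<and>
     sorted_wrt lexless cs \<and> fst (last cs) > 1 \<and> u \<ge> fst (last cs) \<and>
     length ls = length cs - qidx cs \<and> sorted_wrt (<) ls)"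

definition iota :: "'f sent \<Rightarrow> nat" where
  "iota \<sigma> = (case \<sigma> of (\<tau>, cs, j, u, ls) \<Rightarrow> fst (last cs))"

definition sconsts :: "'f sent \<Rightarrow> (nat \<times> nat) set" where
  "sconsts \<sigma> = (case \<sigma> of (\<tau>, cs, j, u, ls) \<Rightarrow>
     set cs \<union> {(fst (last cs) - 1, j)} \<union> (\<lambda>l. (u, l)) ` set ls)"

text \<open>a_{ij} for a in [F]^{r,s} (indices 1-based as in the paper)\<close>
definition aval :: "'m list list \<Rightarrow> nat \<times> nat \<Rightarrow> 'm" where
  "aval a c = a ! (fst c - 1) ! (snd c - 1)"

definition holds :: "('f \<Rightarrow> 'm list \<Rightarrow> 'm) \<Rightarrow> ('m \<Rightarrow> 'm \<Rightarrow> bool) \<Rightarrow> 'm list list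
     \<Rightarrow> 'f sent \<Rightarrow> bool" where
  "holds fI lss a \<sigma> = (case \<sigma> of (\<tau>, cs, j, u, ls) \<Rightarrow>
     (let lhs = tval fI (\<lambda>k. aval a (cs ! k)) \<tau>;
          cs' = take (qidx cs) cs @ map (\<lambda>l. (u, l)) ls
      in lss lhs (aval a (fst (last cs) - 1, j)) \<longrightarrow>
         lhs = tval fI (\<lambda>k. aval a (cs' ! k)) \<tau>))"

end

theory Submission
  imports Defs
begin


definition smallk :: "'k::wellorder itself \<Rightarrow> 'a set \<Rightarrow> bool" where
  "smallk t X \<longleftrightarrow> |X| <o |UNIV::'k set|"

locale inacc = fixes tk :: "'k::wellorder itself"
  assumes inacc: "theta_inaccessible tk"
begin

abbreviation small :: "'a set \<Rightarrow> bool" where "small \<equiv> smallk tk"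

lemma inacc_parts:
  "\<And>m::'k. |{x. x < m}| <o |UNIV::'k set|"
  "|UNIV::nat set| <o |UNIV::'k set|"
  "\<And>A::'k set. |A| <o |UNIV::'k set| \<Longrightarrow> \<exists>m. \<forall>x\<in>A. x < m"
  "\<And>m::'k. |Pow {x. x < m}| <o |UNIV::'k set|"
  using inacc unfolding theta_inaccessible_def by blast+

lemma small_lt: "small {x::'k. x < b}"
  using inacc_parts(1) by (simp add: smallk_def)

lemma small_le: "|X| \<le>o |Y| \<Longrightarrow> small Y \<Longrightarrow> small X"
  unfolding smallk_def using ordLeq_ordLess_trans by blast

lemma small_subset: "X \<subseteq> Y \<Longrightarrow> small Y \<Longrightarrow> small X"
  using small_le card_of_mono1 by blast

lemma small_image: "small X \<Longrightarrow> small (f ` X)"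
  using small_le card_of_image by blast

lemma small_bound: "small (X::'k set) \<Longrightarrow> \<exists>m. \<forall>x\<in>X. x < m"
  using inacc_parts(3) by (simp add: smallk_def)

lemma small_leq_lt: assumes "small X" shows "\<exists>b. |X| \<le>o |{x::'k. x<b}|"
proof -
  have "|X| \<le>o |UNIV::'k set|" using assms by (simp add: smallk_def ordLess_imp_ordLeq)
  then obtain f where f: "inj_on f X" "f ` X \<subseteq> (UNIV::'k set)"
    unfolding card_of_ordLeq[symmetric] by (elim exE conjE)
  have "small (f ` X)" by (rule small_image[OF assms])
  then obtain m where m: "\<forall>x\<in>f ` X. x < m" using small_bound[of "f ` X"] by blast
  have "f ` X \<subseteq> {x::'k. x<m}" using m by auto
  hence "|X| \<le>o |{x::'k. x<m}|"
    using f(1) card_of_ordLeq[of X "{x::'k. x<m}"] by auto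
  thus ?thesis by auto
qed

lemma fin_lt_nat: assumes "finite X" shows "|X| <o |UNIV::nat set|"
proof -
  have "|X| <o natLeq" using assms finite_iff_ordLess_natLeq by auto
  moreover have "natLeq =o |UNIV::nat set|" by (rule ordIso_symmetric[OF card_of_nat])
  ultimately show ?thesis by (rule ordLess_ordIso_trans)
qed

lemma k_infinite: "infinite (UNIV::'k set)"
proof
  assume "finite (UNIV::'k set)"
  hence "|UNIV::'k set| <o |UNIV::nat set|" by (rule fin_lt_nat)
  hence "|UNIV::'k set| <o |UNIV::'k set|" using inacc_parts(2) by (rule ordLess_transitive)
  thus False by (simp add: ordLess_irreflexive)
qed

lemma small_finite: assumes "finite X" shows "small X"
proof -
  have "|X| <o |UNIV::nat set|" using assms by (rule fin_lt_nat)
  hence "|X| <o |UNIV::'k set|" using inacc_parts(2) by (rule ordLess_transitive)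
  thus ?thesis by (simp add: smallk_def)
qed

lemma small_Pow: assumes "small X" shows "small (Pow X)"
proof -
  obtain b where "|X| \<le>o |{x::'k. x<b}|" using small_leq_lt[OF assms] by (elim exE)
  then obtain f where f: "inj_on f X" "f ` X \<subseteq> {x::'k. x<b}"
    unfolding card_of_ordLeq[symmetric] by (elim exE conjE)
  have "|Pow X| \<le>o |Pow {x::'k. x<b}|"
  proof (rule card_of_ordLeqI[of "image f"])
    show "inj_on (image f) (Pow X)" using f(1) by (rule inj_on_image_Pow)
    fix a assume "a \<in> Pow X" thus "f ` a \<in> Pow {x::'k. x<b}" using f(2) by blast
  qed
  moreover have "small (Pow {x::'k. x<b})" using inacc_parts(4) by (simp add: smallk_def)
  ultimately show ?thesis by (rule small_le)
qed

lemma lt_mono: "(a::'k) \<le> b \<Longrightarrow> |{x::'k. x<a}| \<le>o |{x::'k. x<b}|"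
  by (rule card_of_mono1) auto

lemma small_Times: assumes "small X" "small Y" shows "small (X \<times> Y)"
proof -
  obtain b1 where b1: "|X| \<le>o |{x::'k. x<b1}|" using small_leq_lt assms by blast
  obtain b2 where b2: "|Y| \<le>o |{x::'k. x<b2}|" using small_leq_lt assms by blast
  define Z where "Z = {x::'k. x < max b1 b2}"
  have "|X| \<le>o |Z|" unfolding Z_def by (rule ordLeq_transitive[OF b1 lt_mono]) simp
  moreover have "|Y| \<le>o |Z|" unfolding Z_def by (rule ordLeq_transitive[OF b2 lt_mono]) simp
  ultimately have 1: "|X \<times> Y| \<le>o |Z \<times> Z|"
    by (rule ordLeq_transitive[OF card_of_Times_mono1 card_of_Times_mono2])
  have "small (Z \<times> Z)"
  proof (cases "finite Z")
    case True thus ?thesis by (intro small_finite) simp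
  next
    case False
    hence "|Z \<times> Z| =o |Z|" by (rule card_of_Times_same_infinite)
    hence "|Z \<times> Z| \<le>o |Z|" by (rule ordIso_imp_ordLeq)
    moreover have "small Z" unfolding Z_def by (rule small_lt)
    ultimately show ?thesis by (rule small_le)
  qed
  with 1 show ?thesis by (rule small_le)
qed

lemma small_UN: assumes "small I" "\<forall>i\<in>I. small (B i)" shows "small (\<Union>i\<in>I. B i)"
proof -
  have "\<forall>i\<in>I. \<exists>b. |B i| \<le>o |{x::'k. x<b}|" using assms small_leq_lt by blast
  then obtain g where g: "\<forall>i\<in>I. |B i| \<le>o |{x::'k. x<g i}|" by metis
  have "small (g ` I)" using assms(1) by (rule small_image)
  then obtain m where m: "\<forall>x\<in>g ` I. x < m" using small_bound[of "g ` I"] by blast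
  have "\<forall>i\<in>I. |B i| \<le>o |{x::'k. x<m}|"
  proof
    fix i assume i: "i \<in> I"
    hence "|{x::'k. x<g i}| \<le>o |{x::'k. x<m}|" using m lt_mono[of "g i" m] by auto
    moreover have "|B i| \<le>o |{x::'k. x<g i}|" using g i by blast
    ultimately show "|B i| \<le>o |{x::'k. x<m}|" by (rule ordLeq_transitive[rotated])
  qed
  hence "|SIGMA i:I. B i| \<le>o |SIGMA i:I. {x::'k. x<m}|" by (rule card_of_Sigma_mono1)
  hence "|\<Union>i\<in>I. B i| \<le>o |I \<times> {x::'k. x<m}|"
    by (rule ordLeq_transitive[OF card_of_UNION_Sigma[of B I]])
  moreover have "small (I \<times> {x::'k. x<m})" using assms(1) small_lt by (rule small_Times)
  ultimately show ?thesis by (rule small_le)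
qed

lemma small_lists: assumes "small X" shows "small {xs. length xs = n \<and> set xs \<subseteq> X}"
proof (induction n)
  case 0
  have "{xs. length xs = 0 \<and> set xs \<subseteq> X} \<subseteq> {[]}" by auto
  moreover have "small {[]}" by (rule small_finite) simp
  ultimately show ?case by (rule small_subset)
next
  case (Suc n)
  have "{xs. length xs = Suc n \<and> set xs \<subseteq> X} \<subseteq> (\<lambda>(x,xs). x#xs) ` (X \<times> {xs. length xs = n \<and> set xs \<subseteq> X})"
  proof
    fix xs assume "xs \<in> {xs. length xs = Suc n \<and> set xs \<subseteq> X}"
    then obtain y ys where "xs = y#ys" "length ys = n" "y \<in> X" "set ys \<subseteq> X" by (cases xs) auto
    thus "xs \<in> (\<lambda>(x,xs). x#xs) ` (X \<times> {xs. length xs = n \<and> set xs \<subseteq> X})" by force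
  qed
  moreover have "small ((\<lambda>(x,xs). x#xs) ` (X \<times> {xs. length xs = n \<and> set xs \<subseteq> X}))"
    by (rule small_image, rule small_Times[OF assms Suc])
  ultimately show ?case by (rule small_subset)
qed

lemma small_above: assumes "small X" shows "\<exists>\<nu>. |X| <o |{x::'k. x<\<nu>}|"
proof -
  have "small (Pow X)" using assms by (rule small_Pow)
  then obtain b where "|Pow X| \<le>o |{x::'k. x<b}|" using small_leq_lt by blast
  hence "|X| <o |{x::'k. x<b}|" using card_of_Pow[of X] by (rule ordLess_ordLeq_trans[rotated])
  thus ?thesis by blast
qed

lemma exact_subset: assumes "|{x::'k. x<\<mu>}| \<le>o |H|"
  shows "\<exists>Z\<subseteq>H. |Z| =o |{x::'k. x<\<mu>}|"
proof -
  obtain f where f: "inj_on f {x::'k. x<\<mu>}" "f ` {x. x<\<mu>} \<subseteq> H"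
    using assms unfolding card_of_ordLeq[symmetric] by (elim exE conjE)
  have "bij_betw f {x::'k. x<\<mu>} (f ` {x. x<\<mu>})" using f(1) by (rule inj_on_imp_bij_betw)
  hence "|{x::'k. x<\<mu>}| =o |f ` {x. x<\<mu>}|" by (rule card_of_ordIsoI)
  hence "|f ` {x. x<\<mu>}| =o |{x::'k. x<\<mu>}|" by (rule ordIso_symmetric)
  thus ?thesis using f(2) by blast
qed

end


definition trec :: "(('k::wellorder \<Rightarrow> 'a) \<Rightarrow> 'k \<Rightarrow> 'a) \<Rightarrow> 'k \<Rightarrow> 'a" where
  "trec H = wfrec {(x,y). x<y} H"

lemma trec_eq: assumes "\<And>f g x. (\<And>y. y<x \<Longrightarrow> f y = g y) \<Longrightarrow> H f x = H g x"
  shows "trec H x = H (trec H) x"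
proof -
  have "trec H x = H (cut (trec H) {(x,y). x<y} x) x"
    unfolding trec_def by (rule wfrec[OF wf])
  also have "\<dots> = H (trec H) x" by (rule assms) (simp add: cut_apply)
  finally show ?thesis .
qed

definition msets :: "'a set \<Rightarrow> nat \<Rightarrow> 'a set set" where
  "msets H m = {t. t \<subseteq> H \<and> finite t \<and> card t = m}"

definition hom :: "('a set \<Rightarrow> 'c) \<Rightarrow> nat \<Rightarrow> 'a set \<Rightarrow> bool" where
  "hom c m H \<longleftrightarrow> (\<forall>t\<in>msets H m. \<forall>t'\<in>msets H m. c t = c t')"

lemma hom_subset: "hom c m H \<Longrightarrow> H' \<subseteq> H \<Longrightarrow> hom c m H'"
  unfolding hom_def msets_def by blast

definition seqP :: "'a set \<Rightarrow> ('a set \<Rightarrow> 'c) \<Rightarrow> nat \<Rightarrow> 'a \<Rightarrow> 'a set \<Rightarrow> 'a \<Rightarrow> bool" where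
  "seqP A c m y C z \<longleftrightarrow> z \<in> A \<and> z \<notin> C \<and>
     (\<forall>t. t \<subseteq> C \<and> finite t \<and> card t = m \<longrightarrow> c (insert z t) = c (insert y t))"

definition sq :: "'a set \<Rightarrow> ('a set \<Rightarrow> 'c) \<Rightarrow> nat \<Rightarrow> 'a \<Rightarrow> 'k::wellorder \<Rightarrow> 'a" where
  "sq A c m y = trec (\<lambda>f \<xi>. SOME z. seqP A c m y (f ` {\<eta>. \<eta><\<xi>}) z)"

lemma sq_eq: "sq A c m y \<xi> = (SOME z. seqP A c m y (sq A c m y ` {\<eta>. \<eta><\<xi>}) z)"
  unfolding sq_def
  by (rule trec_eq) (metis (no_types, lifting) image_cong mem_Collect_eq)

context inacc begin

lemma Dset_small: "small {(\<xi>::'k, f::'k set \<Rightarrow> 'k option). \<xi> < a \<and>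
     (\<forall>T. f T \<noteq> None \<longrightarrow> T \<subseteq> {\<eta>. \<eta><a} \<and> the (f T) < \<kappa>)}" (is "small ?D")
proof -
  let ?\<Phi> = "\<lambda>(\<xi>::'k, f::'k set \<Rightarrow> 'k option). (\<xi>, {(T,v). f T = Some v})"
  have "|?D| \<le>o |{x::'k. x<a} \<times> Pow (Pow {\<eta>::'k. \<eta><a} \<times> {x::'k. x<\<kappa>})|"
  proof (rule card_of_ordLeqI[of ?\<Phi>])
    show "inj_on ?\<Phi> ?D"
    proof (rule inj_onI)
      fix p q assume "p \<in> ?D" "q \<in> ?D" and pq: "?\<Phi> p = ?\<Phi> q"
      obtain \<xi> f where p: "p = (\<xi>, f)" by (cases p)
      obtain \<xi>' g where q: "q = (\<xi>', g)" by (cases q)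
      have xx: "\<xi> = \<xi>'" and eq: "{(T,v). f T = Some v} = {(T,v). g T = Some v}"
        using pq unfolding p q by auto
      have "f = g"
      proof
        fix T show "f T = g T"
        proof (cases "f T")
          case None
          show ?thesis
          proof (cases "g T")
            case (Some w)
            hence "(T,w) \<in> {(T,v). f T = Some v}" using eq by auto
            thus ?thesis using None by auto
          qed (simp add: None)
        next
          case (Some v)
          hence "(T,v) \<in> {(T,v). g T = Some v}" using eq by auto
          thus ?thesis using Some by auto
        qed
      qed
      thus "p = q" using p q xx by simp
    qed
    fix p assume pD: "p \<in> ?D"
    obtain \<xi> f where p: "p = (\<xi>, f)" by (cases p)
    have 1: "\<xi> < a" and 2: "\<forall>T. f T \<noteq> None \<longrightarrow> T \<subseteq> {\<eta>. \<eta><a} \<and> the (f T) < \<kappa>"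
      using pD unfolding p by auto
    have "{(T,v). f T = Some v} \<subseteq> Pow {\<eta>::'k. \<eta><a} \<times> {x::'k. x<\<kappa>}"
    proof (clarify)
      fix T v assume "f T = Some v"
      thus "T \<in> Pow {\<eta>::'k. \<eta><a} \<and> v \<in> {x::'k. x<\<kappa>}" using 2[rule_format, of T] by auto
    qed
    thus "?\<Phi> p \<in> {x::'k. x<a} \<times> Pow (Pow {\<eta>::'k. \<eta><a} \<times> {x::'k. x<\<kappa>})"
      using 1 unfolding p by simp
  qed
  moreover have "small ({x::'k. x<a} \<times> Pow (Pow {\<eta>::'k. \<eta><a} \<times> {x::'k. x<\<kappa>}))"
    by (intro small_Times small_lt small_Pow) 
  ultimately show ?thesis by (rule small_le)
qed

lemma ER: "\<forall>\<mu> \<kappa>. \<exists>\<nu>. \<forall>(A::'a set) (c::'a set \<Rightarrow> 'c). |range c| \<le>o |{x::'k. x<\<kappa>}| \<longrightarrow>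
     |{x::'k. x<\<nu>}| \<le>o |A| \<longrightarrow> (\<exists>H\<subseteq>A. |{x::'k. x<\<mu>}| \<le>o |H| \<and> hom c m H)"
proof (induction m)
  case 0
  show ?case
  proof (intro allI)
    fix \<mu> \<kappa>
    show "\<exists>\<nu>. \<forall>(A::'a set) (c::'a set \<Rightarrow> 'c). |range c| \<le>o |{x::'k. x<\<kappa>}| \<longrightarrow>
     |{x::'k. x<\<nu>}| \<le>o |A| \<longrightarrow> (\<exists>H\<subseteq>A. |{x::'k. x<\<mu>}| \<le>o |H| \<and> hom c 0 H)"
      by (rule exI[of _ \<mu>]) (auto simp: hom_def msets_def)
  qed
next
  case (Suc m)
  show ?case
  proof (intro allI)
    fix \<mu> \<kappa> :: 'k
    obtain a where a: "\<forall>(A::'a set) (c::'a set \<Rightarrow> 'c). |range c| \<le>o |{x::'k. x<\<kappa>}| \<longrightarrow>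
     |{x::'k. x<a}| \<le>o |A| \<longrightarrow> (\<exists>H\<subseteq>A. |{x::'k. x<\<mu>}| \<le>o |H| \<and> hom c m H)"
      using Suc.IH[THEN spec[of _ \<mu>], THEN spec[of _ \<kappa>]] by (elim exE)
    define D where "D = {(\<xi>::'k, f::'k set \<Rightarrow> 'k option). \<xi> < a \<and>
     (\<forall>T. f T \<noteq> None \<longrightarrow> T \<subseteq> {\<eta>. \<eta><a} \<and> the (f T) < \<kappa>)}"
    have "small D" unfolding D_def by (rule Dset_small)
    obtain \<nu> where \<nu>: "|D| <o |{x::'k. x<\<nu>}|" using small_above[OF \<open>small D\<close>] by (elim exE)
    show "\<exists>\<nu>. \<forall>(A::'a set) (c::'a set \<Rightarrow> 'c). |range c| \<le>o |{x::'k. x<\<kappa>}| \<longrightarrow>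
     |{x::'k. x<\<nu>}| \<le>o |A| \<longrightarrow> (\<exists>H\<subseteq>A. |{x::'k. x<\<mu>}| \<le>o |H| \<and> hom c (Suc m) H)"
    proof (rule exI[of _ \<nu>], intro allI impI)
      fix A :: "'a set" and c :: "'a set \<Rightarrow> 'c"
      assume rc: "|range c| \<le>o |{x::'k. x<\<kappa>}|" and Abig: "|{x::'k. x<\<nu>}| \<le>o |A|"
      let ?s = "\<lambda>y. sq A c m y :: 'k \<Rightarrow> 'a"
      show "\<exists>H\<subseteq>A. |{x::'k. x<\<mu>}| \<le>o |H| \<and> hom c (Suc m) H"
      proof (cases "\<exists>y\<in>A. y \<notin> ?s y ` {\<eta>. \<eta><a}")
        case True
        then obtain y where y: "y \<in> A" "y \<notin> ?s y ` {\<eta>. \<eta><a}" by blast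
        define s where "s = ?s y"
        have sP: "seqP A c m y (s ` {\<eta>. \<eta><\<xi>}) (s \<xi>)" if "\<xi> < a" for \<xi>
        proof -
          have "seqP A c m y (s ` {\<eta>. \<eta><\<xi>}) y"
            using y that unfolding seqP_def s_def by auto
          hence "seqP A c m y (s ` {\<eta>. \<eta><\<xi>}) (SOME z. seqP A c m y (s ` {\<eta>. \<eta><\<xi>}) z)"
            by (rule someI)
          moreover have "s \<xi> = (SOME z. seqP A c m y (s ` {\<eta>. \<eta><\<xi>}) z)" unfolding s_def by (rule sq_eq)
          ultimately show ?thesis by simp
        qed
        have sA: "s \<xi> \<in> A" "s \<xi> \<notin> s ` {\<eta>. \<eta><\<xi>}" if "\<xi> < a" for \<xi>
          using sP[OF that] unfolding seqP_def by auto
        have inj: "inj_on s {\<xi>. \<xi><a}"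
        proof (rule inj_onI)
          fix x1 x2 assume x: "x1 \<in> {\<xi>. \<xi><a}" "x2 \<in> {\<xi>. \<xi><a}" "s x1 = s x2"
          show "x1 = x2"
          proof (rule ccontr)
            assume "x1 \<noteq> x2"
            hence "x1 < x2 \<or> x2 < x1" by auto
            thus False
            proof
              assume "x1 < x2" hence "s x1 \<in> s ` {\<eta>. \<eta><x2}" by auto
              thus False using sA(2)[of x2] x by auto
            next
              assume "x2 < x1" hence "s x2 \<in> s ` {\<eta>. \<eta><x1}" by auto
              thus False using sA(2)[of x1] x by auto
            qed
          qed
        qed
        define E where "E = s ` {\<xi>. \<xi><a}"
        have EA: "E \<subseteq> A" unfolding E_def using sA(1) by auto
        have "bij_betw s {\<xi>. \<xi><a} E" unfolding E_def using inj by (rule inj_on_imp_bij_betw)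
        hence "|{\<xi>::'k. \<xi><a}| =o |E|" by (rule card_of_ordIsoI)
        hence Ebig: "|{\<xi>::'k. \<xi><a}| \<le>o |E|" by (rule ordIso_imp_ordLeq)
        define c' where "c' = (\<lambda>t. c (insert y t))"
        have "range c' \<subseteq> range c" unfolding c'_def by auto
        hence "|range c'| \<le>o |range c|" by (rule card_of_mono1)
        hence rc': "|range c'| \<le>o |{x::'k. x<\<kappa>}|" using rc by (rule ordLeq_transitive)
        obtain H where H: "H \<subseteq> E" "|{x::'k. x<\<mu>}| \<le>o |H|" "hom c' m H"
          using a[rule_format, OF rc' Ebig] by (elim exE conjE)
        have key: "\<exists>t\<in>msets H m. c u = c' t" if u: "u \<in> msets H (Suc m)" for u
        proof -
          have uH: "u \<subseteq> H" and fu: "finite u" and cu: "card u = Suc m"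
            using u unfolding msets_def by auto
          define I where "I = {\<xi>. \<xi> < a \<and> s \<xi> \<in> u}"
          have "s ` I \<subseteq> u" unfolding I_def by auto
          moreover have "inj_on s I" using inj unfolding I_def by (rule inj_on_subset) auto
          ultimately have fI: "finite I" using fu by (meson finite_imageD finite_subset)
          have "u \<noteq> {}" using cu by auto
          then obtain x0 where "x0 \<in> u" by blast
          hence "x0 \<in> E" using uH H(1) by auto
          then obtain \<xi>1 where "\<xi>1 < a" "s \<xi>1 = x0" unfolding E_def by auto
          hence "I \<noteq> {}" unfolding I_def using \<open>x0 \<in> u\<close> by auto
          define \<xi>0 where "\<xi>0 = Max I"
          have \<xi>0I: "\<xi>0 \<in> I" unfolding \<xi>0_def using fI \<open>I \<noteq> {}\<close> by (rule Max_in)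
          hence \<xi>0a: "\<xi>0 < a" and xu: "s \<xi>0 \<in> u" unfolding I_def by auto
          define t where "t = u - {s \<xi>0}"
          have tsub: "t \<subseteq> s ` {\<eta>. \<eta><\<xi>0}"
          proof
            fix z assume z: "z \<in> t"
            hence "z \<in> E" using uH H(1) unfolding t_def by auto
            then obtain \<eta> where \<eta>: "\<eta> < a" "s \<eta> = z" unfolding E_def by auto
            hence "\<eta> \<in> I" using z unfolding I_def t_def by auto
            hence "\<eta> \<le> \<xi>0" unfolding \<xi>0_def by (rule Max_ge[OF fI])
            moreover have "\<eta> \<noteq> \<xi>0" using \<eta> z unfolding t_def by auto
            ultimately show "z \<in> s ` {\<eta>. \<eta><\<xi>0}" using \<eta> by auto
          qed
          have ft: "finite t" and ct: "card t = m" unfolding t_def using fu cu xu by auto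
          have "c (insert (s \<xi>0) t) = c (insert y t)"
            using sP[OF \<xi>0a] tsub ft ct unfolding seqP_def by blast
          moreover have "insert (s \<xi>0) t = u" unfolding t_def using xu by auto
          ultimately have "c u = c' t" unfolding c'_def by simp
          moreover have "t \<in> msets H m" unfolding msets_def using ft ct uH unfolding t_def by auto
          ultimately show ?thesis by blast
        qed
        have "hom c (Suc m) H" unfolding hom_def
        proof (intro ballI)
          fix u u' assume "u \<in> msets H (Suc m)" "u' \<in> msets H (Suc m)"
          then obtain t t' where "t \<in> msets H m" "c u = c' t" "t' \<in> msets H m" "c u' = c' t'"
            using key by meson
          thus "c u = c u'" using H(3) unfolding hom_def by metis
        qed
        moreover have "H \<subseteq> A" using H(1) EA by (rule subset_trans)
        ultimately show ?thesis using H(2) by (intro exI[of _ H] conjI)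
      next
        case False
        have short: "\<forall>y\<in>A. \<exists>\<eta><a. ?s y \<eta> = y"
        proof
          fix y assume yA: "y \<in> A"
          have "y \<in> ?s y ` {\<eta>. \<eta><a}"
          proof (rule ccontr)
            assume "y \<notin> ?s y ` {\<eta>. \<eta><a}"
            hence "\<exists>y\<in>A. y \<notin> ?s y ` {\<eta>. \<eta><a}" by (rule bexI[OF _ yA])
            thus False using False by (rule notE[rotated])
          qed
          then obtain \<eta> where "\<eta> \<in> {\<eta>. \<eta><a}" "y = ?s y \<eta>" by (rule imageE)
          thus "\<exists>\<eta><a. ?s y \<eta> = y" by auto
        qed
        obtain g where g: "inj_on g (range c)" "g ` range c \<subseteq> {x::'k. x<\<kappa>}"
          using rc unfolding card_of_ordLeq[symmetric] by (elim exE conjE)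
        define et where "et = (\<lambda>y. SOME \<eta>. \<eta> < a \<and> ?s y \<eta> = y)"
        have et: "et y < a" "?s y (et y) = y" if "y \<in> A" for y
          using someI_ex[OF short[rule_format, OF that]] unfolding et_def by auto
        define Dy where "Dy = (\<lambda>y \<xi> T. if T \<subseteq> {\<eta>. \<eta><\<xi>} \<and> finite (?s y ` T) \<and> card (?s y ` T) = m
             then Some (g (c (insert y (?s y ` T)))) else None)"
        define \<Phi> where "\<Phi> = (\<lambda>y. (et y, Dy y (et y)))"
        have "|A| \<le>o |D|"
        proof (rule card_of_ordLeqI[of \<Phi>])
          fix y assume yA: "y \<in> A"
          have 1: "et y < a" using et yA by blast
          have 2: "\<forall>T. Dy y (et y) T \<noteq> None \<longrightarrow> T \<subseteq> {\<eta>. \<eta><a} \<and> the (Dy y (et y) T) < \<kappa>"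
          proof (intro allI impI)
            fix T assume "Dy y (et y) T \<noteq> None"
            hence T: "T \<subseteq> {\<eta>. \<eta><et y}" and v: "Dy y (et y) T = Some (g (c (insert y (?s y ` T))))"
              unfolding Dy_def by (auto split: if_splits)
            have "T \<subseteq> {\<eta>. \<eta><a}" using T et(1)[OF yA] by auto
            moreover have "the (Dy y (et y) T) < \<kappa>" using v g(2) by auto
            ultimately show "T \<subseteq> {\<eta>. \<eta><a} \<and> the (Dy y (et y) T) < \<kappa>" ..
          qed
          show "\<Phi> y \<in> D" unfolding D_def \<Phi>_def using 1 2 by simp
        next
          show "inj_on \<Phi> A"
          proof (rule inj_onI)
            fix y y' assume yA: "y \<in> A" and y'A: "y' \<in> A" and eq: "\<Phi> y = \<Phi> y'"
            define \<xi> where "\<xi> = et y"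
            have e1: "et y' = \<xi>" and e2: "Dy y \<xi> = Dy y' \<xi>" using eq unfolding \<Phi>_def \<xi>_def by auto
            have agree: "\<forall>\<eta>. \<eta> \<le> \<xi> \<longrightarrow> ?s y \<eta> = ?s y' \<eta>"
            proof (intro allI)
              fix \<eta> show "\<eta> \<le> \<xi> \<longrightarrow> ?s y \<eta> = ?s y' \<eta>"
              proof (induction \<eta> rule: less_induct)
                case (less \<eta>)
                show ?case
                proof
                  assume "\<eta> \<le> \<xi>"
                  have below: "?s y \<eta>' = ?s y' \<eta>'" if "\<eta>' < \<eta>" for \<eta>'
                    using less.IH[OF that] that \<open>\<eta> \<le> \<xi>\<close> by auto
                  define C where "C = ?s y ` {\<eta>'. \<eta>'<\<eta>}"
                  have C': "?s y' ` {\<eta>'. \<eta>'<\<eta>} = C" unfolding C_def using below by auto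
                  have cc: "c (insert y t) = c (insert y' t)"
                    if t: "t \<subseteq> C" "finite t" "card t = m" for t
                  proof -
                    define T where "T = {\<eta>'. \<eta>' < \<eta> \<and> ?s y \<eta>' \<in> t}"
                    have sT: "?s y ` T = t" using t(1) unfolding T_def C_def by auto
                    have sT': "?s y' ` T = t" using sT below unfolding T_def by auto
                    have Tx: "T \<subseteq> {\<eta>'. \<eta>'<\<xi>}" unfolding T_def using \<open>\<eta> \<le> \<xi>\<close> by auto
                    have "Dy y \<xi> T = Some (g (c (insert y t)))" unfolding Dy_def using Tx sT t by auto
                    moreover have "Dy y' \<xi> T = Some (g (c (insert y' t)))" unfolding Dy_def using Tx sT' t by auto
                    ultimately have "g (c (insert y t)) = g (c (insert y' t))" using e2 by auto
                    thus ?thesis using g(1) unfolding inj_on_def by blast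
                  qed
                  have "seqP A c m y C = seqP A c m y' C"
                  proof
                    fix z show "seqP A c m y C z = seqP A c m y' C z"
                      unfolding seqP_def using cc by auto
                  qed
                  moreover have "?s y \<eta> = (SOME z. seqP A c m y C z)" unfolding C_def by (rule sq_eq)
                  moreover have "?s y' \<eta> = (SOME z. seqP A c m y' C z)" unfolding C'[symmetric] by (rule sq_eq)
                  ultimately show "?s y \<eta> = ?s y' \<eta>" by simp
                qed
              qed
            qed
            have "y = ?s y \<xi>" using et(2)[OF yA] unfolding \<xi>_def by simp
            also have "\<dots> = ?s y' \<xi>" using agree by simp
            also have "\<dots> = y'" using et(2)[OF y'A] e1 by simp
            finally show "y = y'" .
          qed
        qed
        hence "|A| <o |{x::'k. x<\<nu>}|" using \<nu> by (rule ordLeq_ordLess_trans)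
        hence "|A| <o |A|" using Abig by (rule ordLess_ordLeq_trans)
        thus ?thesis by (simp add: ordLess_irreflexive)
      qed
    qed
  qed
qed

end


definition HCg :: "(nat \<times> ('a set \<Rightarrow> 'c)) list \<Rightarrow> 'a set \<Rightarrow> 'c list \<Rightarrow> bool" where
  "HCg cl H \<gamma>s \<longleftrightarrow> (\<forall>i<length cl. \<forall>t\<in>msets H (fst (cl!i)). snd (cl!i) t = \<gamma>s!i)"

lemma HCg_subset: "HCg cl H \<gamma>s \<Longrightarrow> H' \<subseteq> H \<Longrightarrow> HCg cl H' \<gamma>s"
  unfolding HCg_def msets_def by blast

lemma hom_to_HCg:
  assumes h: "\<forall>mc\<in>set cl. hom (snd mc) (fst mc) H" and r: "\<forall>mc\<in>set cl. range (snd mc) \<subseteq> CS"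
  shows "\<exists>\<gamma>s. length \<gamma>s = length cl \<and> set \<gamma>s \<subseteq> CS \<and> HCg cl H \<gamma>s"
proof (intro exI conjI)
  let ?g = "map (\<lambda>mc. snd mc (SOME t. t \<in> msets H (fst mc))) cl"
  show "length ?g = length cl" by simp
  show "set ?g \<subseteq> CS"
  proof
    fix x assume "x \<in> set ?g"
    then obtain mc where mc: "mc \<in> set cl" "x = snd mc (SOME t. t \<in> msets H (fst mc))" by auto
    have "x \<in> range (snd mc)" using mc(2) by simp
    thus "x \<in> CS" using r mc(1) by blast
  qed
  show "HCg cl H ?g" unfolding HCg_def
  proof (intro allI impI ballI)
    fix i t assume i: "i < length cl" and t: "t \<in> msets H (fst (cl!i))"
    define t0 where "t0 = (SOME t. t \<in> msets H (fst (cl!i)))"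
    have t0: "t0 \<in> msets H (fst (cl!i))" using t unfolding t0_def by (rule someI)
    have "cl!i \<in> set cl" using i by simp
    hence "hom (snd (cl!i)) (fst (cl!i)) H" using h by blast
    hence "snd (cl!i) t = snd (cl!i) t0" using t t0 unfolding hom_def by blast
    moreover have "?g ! i = snd (cl!i) t0" using i unfolding t0_def by simp
    ultimately show "snd (cl ! i) t = ?g ! i" by simp
  qed
qed

context inacc begin

lemma multiER:
  assumes "\<forall>mc\<in>set cl. |range (snd mc)| \<le>o |{x::'k. x<\<kappa>}|"
  shows "\<forall>\<mu>. \<exists>\<nu>. \<forall>(A::'a set). |{x::'k. x<\<nu>}| \<le>o |A| \<longrightarrow>
     (\<exists>H\<subseteq>A. |{x::'k. x<\<mu>}| \<le>o |H| \<and> (\<forall>mc\<in>set (cl::(nat \<times> ('a set \<Rightarrow> 'c)) list). hom (snd mc) (fst mc) H))"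
  using assms
proof (induction cl)
  case Nil
  show ?case
  proof
    fix \<mu> show "\<exists>\<nu>. \<forall>(A::'a set). |{x::'k. x<\<nu>}| \<le>o |A| \<longrightarrow>
     (\<exists>H\<subseteq>A. |{x::'k. x<\<mu>}| \<le>o |H| \<and> (\<forall>mc\<in>set ([]::(nat \<times> ('a set \<Rightarrow> 'c)) list). hom (snd mc) (fst mc) H))"
    proof (rule exI[of _ \<mu>], intro allI impI)
      fix A :: "'a set" assume "|{x::'k. x<\<mu>}| \<le>o |A|"
      thus "\<exists>H\<subseteq>A. |{x::'k. x<\<mu>}| \<le>o |H| \<and> (\<forall>mc\<in>set ([]::(nat \<times> ('a set \<Rightarrow> 'c)) list). hom (snd mc) (fst mc) H)"
        by (intro exI[of _ A]) simp
    qed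
  qed
next
  case (Cons mc cl)
  obtain m c where mc: "mc = (m, c)" by (cases mc)
  have rc: "|range c| \<le>o |{x::'k. x<\<kappa>}|" using Cons.prems unfolding mc by simp
  have IH: "\<forall>\<mu>. \<exists>\<nu>. \<forall>(A::'a set). |{x::'k. x<\<nu>}| \<le>o |A| \<longrightarrow>
     (\<exists>H\<subseteq>A. |{x::'k. x<\<mu>}| \<le>o |H| \<and> (\<forall>mc\<in>set cl. hom (snd mc) (fst mc) H))"
  proof -
    have "\<forall>mc\<in>set cl. |range (snd mc)| \<le>o |{x::'k. x<\<kappa>}|" using Cons.prems by simp
    thus ?thesis by (rule Cons.IH)
  qed
  show ?case
  proof
    fix \<mu>
    obtain \<nu>1 where \<nu>1: "\<forall>(A::'a set). |{x::'k. x<\<nu>1}| \<le>o |A| \<longrightarrow>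
     (\<exists>H\<subseteq>A. |{x::'k. x<\<mu>}| \<le>o |H| \<and> (\<forall>mc\<in>set cl. hom (snd mc) (fst mc) H))"
      using IH[THEN spec[of _ \<mu>]] by (elim exE)
    obtain \<nu> where \<nu>: "\<forall>(A::'a set) (c::'a set \<Rightarrow> 'c). |range c| \<le>o |{x::'k. x<\<kappa>}| \<longrightarrow>
     |{x::'k. x<\<nu>}| \<le>o |A| \<longrightarrow> (\<exists>H\<subseteq>A. |{x::'k. x<\<nu>1}| \<le>o |H| \<and> hom c m H)"
      using ER[of m, THEN spec[of _ \<nu>1], THEN spec[of _ \<kappa>]] by (elim exE)
    show "\<exists>\<nu>. \<forall>(A::'a set). |{x::'k. x<\<nu>}| \<le>o |A| \<longrightarrow>
     (\<exists>H\<subseteq>A. |{x::'k. x<\<mu>}| \<le>o |H| \<and> (\<forall>mc\<in>set (mc#cl). hom (snd mc) (fst mc) H))"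
    proof (rule exI[of _ \<nu>], intro allI impI)
      fix A :: "'a set" assume A: "|{x::'k. x<\<nu>}| \<le>o |A|"
      obtain H1 where H1: "H1 \<subseteq> A" "|{x::'k. x<\<nu>1}| \<le>o |H1|" "hom c m H1"
        using \<nu>[rule_format, OF rc A] by (elim exE conjE)
      obtain H where H: "H \<subseteq> H1" "|{x::'k. x<\<mu>}| \<le>o |H|" "\<forall>mc\<in>set cl. hom (snd mc) (fst mc) H"
        using \<nu>1[rule_format, OF H1(2)] by (elim exE conjE)
      have "hom c m H" using H1(3) H(1) by (rule hom_subset)
      hence "\<forall>mc\<in>set (mc#cl). hom (snd mc) (fst mc) H" using H(3) mc by auto
      moreover have "H \<subseteq> A" using H(1) H1(1) by (rule subset_trans)
      ultimately show "\<exists>H\<subseteq>A. |{x::'k. x<\<mu>}| \<le>o |H| \<and> (\<forall>mc\<in>set (mc#cl). hom (snd mc) (fst mc) H)"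
        using H(2) by (intro exI[of _ H] conjI)
    qed
  qed
qed

lemma pigeon:
  assumes CS: "small CS" and rg: "\<forall>mc\<in>set cl. range (snd mc) \<subseteq> CS"
    and unb: "\<forall>b \<mu>. \<exists>i. b < i \<and> |{x::'k. x<\<mu>}| \<le>o |Y i|"
  shows "\<exists>\<gamma>s. length \<gamma>s = length cl \<and> set \<gamma>s \<subseteq> CS \<and>
     (\<forall>(b::'k) \<mu>. \<exists>i. b < i \<and> (\<exists>H\<subseteq>(Y i::'a set). |{x::'k. x<\<mu>}| \<le>o |H| \<and> HCg cl H \<gamma>s))"
proof (rule ccontr)
  define \<Gamma> where "\<Gamma> = {\<gamma>s. length \<gamma>s = length cl \<and> set \<gamma>s \<subseteq> CS}"
  assume "\<not> ?thesis"
  hence bad: "\<forall>\<gamma>s\<in>\<Gamma>. \<exists>p. \<forall>i. fst p < i \<longrightarrow> \<not> (\<exists>H\<subseteq>Y i. |{x::'k. x<snd p}| \<le>o |H| \<and> HCg cl H \<gamma>s)"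
    unfolding \<Gamma>_def by auto
  obtain f where f: "\<forall>\<gamma>s\<in>\<Gamma>. \<forall>i. fst (f \<gamma>s) < i \<longrightarrow> \<not> (\<exists>H\<subseteq>Y i. |{x::'k. x<snd (f \<gamma>s)}| \<le>o |H| \<and> HCg cl H \<gamma>s)"
    using bchoice[OF bad] by (elim exE)
  define bf where "bf = (\<lambda>\<gamma>s. fst (f \<gamma>s))"
  define \<mu>f where "\<mu>f = (\<lambda>\<gamma>s. snd (f \<gamma>s))"
  have bf: "\<forall>\<gamma>s\<in>\<Gamma>. \<forall>i. bf \<gamma>s < i \<longrightarrow> \<not> (\<exists>H\<subseteq>Y i. |{x::'k. x<\<mu>f \<gamma>s}| \<le>o |H| \<and> HCg cl H \<gamma>s)"
    using f unfolding bf_def \<mu>f_def by blast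
  have sG: "small \<Gamma>" unfolding \<Gamma>_def using small_lists[OF CS] by simp
  obtain B where B: "\<forall>x\<in>bf ` \<Gamma>. x < B" using small_bound[OF small_image[OF sG, of bf]] by (elim exE)
  obtain U where U: "\<forall>x\<in>\<mu>f ` \<Gamma>. x < U" using small_bound[OF small_image[OF sG, of \<mu>f]] by (elim exE)
  obtain \<kappa> where \<kappa>: "|CS| \<le>o |{x::'k. x<\<kappa>}|" using small_leq_lt[OF CS] by (elim exE)
  have rc: "\<forall>mc\<in>set cl. |range (snd mc)| \<le>o |{x::'k. x<\<kappa>}|"
  proof
    fix mc assume "mc \<in> set cl"
    hence "|range (snd mc)| \<le>o |CS|" using rg card_of_mono1 by blast
    thus "|range (snd mc)| \<le>o |{x::'k. x<\<kappa>}|" using \<kappa> by (rule ordLeq_transitive)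
  qed
  obtain \<nu> where \<nu>: "\<forall>(A::'a set). |{x::'k. x<\<nu>}| \<le>o |A| \<longrightarrow>
     (\<exists>H\<subseteq>A. |{x::'k. x<U}| \<le>o |H| \<and> (\<forall>mc\<in>set cl. hom (snd mc) (fst mc) H))"
    using multiER[OF rc, THEN spec[of _ U]] by (elim exE)
  obtain i where i: "B < i" "|{x::'k. x<\<nu>}| \<le>o |Y i|" using unb[THEN spec[of _ B], THEN spec[of _ \<nu>]] by (elim exE conjE)
  obtain H where H: "H \<subseteq> Y i" "|{x::'k. x<U}| \<le>o |H|" "\<forall>mc\<in>set cl. hom (snd mc) (fst mc) H"
    using \<nu>[rule_format, OF i(2)] by (elim exE conjE)
  obtain \<gamma>s where g: "length \<gamma>s = length cl" "set \<gamma>s \<subseteq> CS" "HCg cl H \<gamma>s"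
    using hom_to_HCg[OF H(3) rg] by (elim exE conjE)
  have gG: "\<gamma>s \<in> \<Gamma>" unfolding \<Gamma>_def using g by simp
  have "bf \<gamma>s < i" using B gG i(1) by force
  moreover have "|{x::'k. x<\<mu>f \<gamma>s}| \<le>o |H|"
  proof -
    have "\<mu>f \<gamma>s \<le> U" using U gG by force
    hence "|{x::'k. x<\<mu>f \<gamma>s}| \<le>o |{x::'k. x<U}|" by (rule lt_mono)
    thus ?thesis using H(2) by (rule ordLeq_transitive)
  qed
  ultimately show False using bf gG H(1) g(3) by blast
qed

lemma unbdd:
  fixes Y :: "'k \<Rightarrow> 'a set"
  assumes sm: "\<forall>i. small (Y i)" and ex: "\<forall>m. \<exists>i. |{x::'k. x<m}| \<le>o |(Y i::'a set)|"
  shows "\<forall>b \<mu>. \<exists>i. b < i \<and> |{x::'k. x<\<mu>}| \<le>o |Y i|"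
proof (intro allI)
  fix b \<mu> :: 'k
  define U where "U = (\<Union>i\<in>{i. i \<le> b}. Y i)"
  obtain b' where b': "\<forall>x\<in>{b}. x < b'" using small_bound[OF small_finite[of "{b}"]] by auto
  have "{i::'k. i \<le> b} \<subseteq> {x. x<b'}" using b' by auto
  hence "small {i::'k. i \<le> b}" using small_lt by (rule small_subset)
  hence "small U" unfolding U_def using sm by (intro small_UN) auto
  obtain \<nu> where \<nu>: "|U| <o |{x::'k. x<\<nu>}|" using small_above[OF \<open>small U\<close>] by (elim exE)
  define m where "m = max \<mu> \<nu>"
  obtain i where i: "|{x::'k. x<m}| \<le>o |Y i|" using ex[THEN spec[of _ m]] by (elim exE)
  have m\<nu>: "|{x::'k. x<\<nu>}| \<le>o |{x::'k. x<m}|" unfolding m_def by (rule lt_mono) simp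
  have m\<mu>: "|{x::'k. x<\<mu>}| \<le>o |{x::'k. x<m}|" unfolding m_def by (rule lt_mono) simp
  have "b < i"
  proof (rule ccontr)
    assume "\<not> b < i" hence "i \<le> b" by simp
    hence "Y i \<subseteq> U" unfolding U_def by auto
    hence "|Y i| \<le>o |U|" by (rule card_of_mono1)
    hence "|{x::'k. x<m}| \<le>o |U|" using i by (rule ordLeq_transitive[rotated])
    hence "|{x::'k. x<\<nu>}| \<le>o |U|" using m\<nu> by (rule ordLeq_transitive[rotated])
    thus False using \<nu> not_ordLess_ordLeq by blast
  qed
  moreover have "|{x::'k. x<\<mu>}| \<le>o |Y i|" using m\<mu> i by (rule ordLeq_transitive)
  ultimately show "\<exists>i. b < i \<and> |{x::'k. x<\<mu>}| \<le>o |Y i|" by blast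
qed

lemma enum_exists:
  assumes ex: "\<forall>i (b::'k). \<exists>l. b < l \<and> Pr i l"
  shows "\<exists>R::'k \<Rightarrow> 'k. strict_mono R \<and> (\<forall>i. Pr i (R i))"
proof -
  define H where "H = (\<lambda>(f::'k \<Rightarrow> 'k) i. LEAST l. (\<forall>j<i. f j < l) \<and> Pr i l)"
  define R where "R = trec H"
  have Req: "R i = (LEAST l. (\<forall>j<i. R j < l) \<and> Pr i l)" for i
  proof -
    have "R i = H R i" unfolding R_def
      by (rule trec_eq) (simp add: H_def)
    thus ?thesis unfolding H_def by simp
  qed
  have P: "(\<forall>j<i. R j < R i) \<and> Pr i (R i)" for i
  proof -
    have "small (R ` {j. j < i})" by (rule small_image[OF small_lt])
    obtain b where b: "\<forall>x\<in>R ` {j. j<i}. x < b" using small_bound[OF \<open>small (R ` {j. j < i})\<close>] by (elim exE)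
    obtain l where l: "b < l" "Pr i l" using ex[THEN spec[of _ i], THEN spec[of _ b]] by (elim exE conjE)
    have "(\<forall>j<i. R j < l) \<and> Pr i l" using b l by force
    hence "(\<forall>j<i. R j < (LEAST l. (\<forall>j<i. R j < l) \<and> Pr i l)) \<and> Pr i (LEAST l. (\<forall>j<i. R j < l) \<and> Pr i l)"
      by (rule LeastI)
    thus ?thesis using Req[of i] by simp
  qed
  have "strict_mono R" unfolding strict_mono_def using P by blast
  thus ?thesis using P by blast
qed

end


lemma tval_cong: "(\<And>x. x \<in> tvars t \<Longrightarrow> v x = v' x) \<Longrightarrow> tval fI v t = tval fI v' t"
proof (induction t)
  case (V x) thus ?case by simp
next
  case (Fn f ts)
  have "map (tval fI v) ts = map (tval fI v') ts"
  proof (rule map_cong[OF refl])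
    fix t assume t: "t \<in> set ts"
    show "tval fI v t = tval fI v' t"
      using Fn.IH[OF t] Fn.prems t by auto
  qed
  thus ?case by (metis tval.simps(2))
qed

lemma qidx_props:
  assumes ne: "cs \<noteq> []" and so: "sorted_wrt lexless cs"
  shows "qidx cs < length cs"
    and "\<And>k. k < qidx cs \<Longrightarrow> fst (cs!k) < fst (last cs)"
    and "\<And>k. qidx cs \<le> k \<Longrightarrow> k < length cs \<Longrightarrow> fst (cs!k) = fst (last cs)"
    and "\<And>k k'. qidx cs \<le> k \<Longrightarrow> k < k' \<Longrightarrow> k' < length cs \<Longrightarrow> snd (cs!k) < snd (cs!k')"
proof -
  let ?n = "length cs"
  let ?P = "\<lambda>k. k < ?n \<and> fst (cs!k) \<noteq> fst (last cs)"
  have lastn: "last cs = cs!(?n - 1)" using ne by (simp add: last_conv_nth)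
  have lex: "lexless (cs!k) (cs!k')" if "k < k'" "k' < ?n" for k k'
    using so that by (simp add: sorted_wrt_iff_nth_less)
  have fle: "fst (cs!k) \<le> fst (cs!k')" if "k \<le> k'" "k' < ?n" for k k'
  proof (cases "k = k'")
    case False thus ?thesis using lex[of k k'] that unfolding lexless_def by auto
  qed simp
  have bnd: "?P y \<Longrightarrow> y \<le> ?n" for y by auto
  show q3: "fst (cs!k) = fst (last cs)" if "qidx cs \<le> k" "k < ?n" for k
  proof (rule ccontr)
    assume "fst (cs!k) \<noteq> fst (last cs)"
    hence Pk: "?P k" using that by auto
    hence "qidx cs = Suc (GREATEST k. ?P k)" unfolding qidx_def by auto
    moreover have "k \<le> (GREATEST k. ?P k)" by (rule Greatest_le_nat[where P = ?P, OF Pk bnd])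
    ultimately show False using that by auto
  qed
  show "qidx cs < ?n"
  proof (cases "\<exists>k. ?P k")
    case True
    then obtain k where Pk: "?P k" by blast
    have G: "?P (GREATEST k. ?P k)" by (rule GreatestI_nat[where P = ?P, OF Pk bnd])
    have "(GREATEST k. ?P k) \<noteq> ?n - 1" using G lastn by auto
    hence "Suc (GREATEST k. ?P k) < ?n" using G by auto
    moreover have "qidx cs = Suc (GREATEST k. ?P k)" unfolding qidx_def using True by auto
    ultimately show ?thesis by simp
  next
    case False thus ?thesis unfolding qidx_def using ne by auto
  qed
  show "fst (cs!k) < fst (last cs)" if k: "k < qidx cs" for k
  proof -
    have ex: "\<exists>k. ?P k"
    proof (rule ccontr)
      assume "\<not> (\<exists>k. ?P k)" hence "qidx cs = 0" unfolding qidx_def by auto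
      thus False using k by simp
    qed
    then obtain k0 where Pk: "?P k0" by blast
    define G where "G = (GREATEST k. ?P k)"
    have PG: "?P G" unfolding G_def by (rule GreatestI_nat[where P = ?P, OF Pk bnd])
    have "qidx cs = Suc G" unfolding qidx_def G_def using ex by auto
    hence "k \<le> G" using k by simp
    hence "fst (cs!k) \<le> fst (cs!G)" using PG fle by auto
    moreover have "fst (cs!G) \<le> fst (last cs)" using PG fle[of G "?n - 1"] lastn by auto
    ultimately show ?thesis using PG by auto
  qed
  show "snd (cs!k) < snd (cs!k')" if "qidx cs \<le> k" "k < k'" "k' < ?n" for k k'
  proof -
    have "fst (cs!k) = fst (cs!k')" using q3[of k] q3[of k'] that by auto
    thus ?thesis using lex[of k k'] that unfolding lexless_def by auto
  qed
qed

definition Gs :: "('f \<Rightarrow> 'm list \<Rightarrow> 'm) \<Rightarrow> 'f sent \<Rightarrow> 'm list list \<Rightarrow> 'm list \<Rightarrow> 'm" where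
  "Gs fI \<sigma> p zs = (case \<sigma> of (\<tau>, cs, j, u, ls) \<Rightarrow>
     tval fI (\<lambda>k. if k < qidx cs then aval p (cs!k) else zs!(k - qidx cs)) \<tau>)"
definition Js :: "'f sent \<Rightarrow> nat list" where
  "Js \<sigma> = (case \<sigma> of (\<tau>, cs, j, u, ls) \<Rightarrow> map (\<lambda>c. snd c - 1) (drop (qidx cs) cs))"
definition Ls :: "'f sent \<Rightarrow> nat list" where
  "Ls \<sigma> = (case \<sigma> of (\<tau>, cs, j, u, ls) \<Rightarrow> map (\<lambda>l. l - 1) ls)"
definition cvs :: "nat \<Rightarrow> 'f sent \<Rightarrow> 'm list list \<Rightarrow> 'm" where
  "cvs e' \<sigma> p = (case \<sigma> of (\<tau>, cs, j, u, ls) \<Rightarrow> aval p (e' - 1, j))"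
definition us :: "'f sent \<Rightarrow> nat" where
  "us \<sigma> = (case \<sigma> of (\<tau>, cs, j, u, ls) \<Rightarrow> u)"
definition cj :: "'f sent \<Rightarrow> nat" where
  "cj \<sigma> = (case \<sigma> of (\<tau>, cs, j, u, ls) \<Rightarrow> j)"

definition goodsig :: "('f \<Rightarrow> nat) \<Rightarrow> nat \<Rightarrow> nat \<Rightarrow> nat \<Rightarrow> 'f sent \<Rightarrow> bool" where
  "goodsig ar r s e' \<sigma> \<longleftrightarrow> is_sigma ar \<sigma> \<and> iota \<sigma> = e' \<and>
      (\<forall>c\<in>sconsts \<sigma>. 1 \<le> fst c \<and> fst c \<le> s \<and> 1 \<le> snd c \<and> snd c \<le> r)"

lemma sent_pos:
  assumes g: "goodsig ar r s e' \<sigma>"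
  shows "sorted_wrt (<) (Js \<sigma>)" "\<forall>x\<in>set (Js \<sigma>). x < r"
    "sorted_wrt (<) (Ls \<sigma>)" "\<forall>x\<in>set (Ls \<sigma>). x < r"
    "length (Ls \<sigma>) = length (Js \<sigma>)" "e' \<le> us \<sigma>" "us \<sigma> \<le> s" "1 \<le> cj \<sigma>" "cj \<sigma> \<le> r"
    "2 \<le> e'"
proof -
  obtain \<tau> cs j u ls where \<sigma>: "\<sigma> = (\<tau>, cs, j, u, ls)" by (cases \<sigma>) auto
  have isg: "cs \<noteq> []" "sorted_wrt lexless cs" "fst (last cs) > 1" "u \<ge> fst (last cs)"
     "length ls = length cs - qidx cs" "sorted_wrt (<) ls"
    using g unfolding goodsig_def is_sigma_def \<sigma> by auto
  have io: "fst (last cs) = e'" using g unfolding goodsig_def iota_def \<sigma> by auto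
  have bd: "\<forall>c\<in>sconsts \<sigma>. 1 \<le> fst c \<and> fst c \<le> s \<and> 1 \<le> snd c \<and> snd c \<le> r"
    using g unfolding goodsig_def by auto
  have bcs: "\<forall>c\<in>set cs. 1 \<le> snd c \<and> snd c \<le> r" using bd unfolding sconsts_def \<sigma> by auto
  have bls: "\<forall>l\<in>set ls. 1 \<le> l \<and> l \<le> r"
  proof
    fix l assume "l \<in> set ls"
    hence "(u,l) \<in> sconsts \<sigma>" unfolding sconsts_def \<sigma> by auto
    thus "1 \<le> l \<and> l \<le> r" using bd by fastforce
  qed
  have bu: "u \<le> s"
  proof -
    have "ls \<noteq> []" using isg(5) qidx_props(1)[OF isg(1,2)] by auto
    then obtain l where "l \<in> set ls" by (cases ls) auto
    hence "(u,l) \<in> sconsts \<sigma>" unfolding sconsts_def \<sigma> by auto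
    thus "u \<le> s" using bd by fastforce
  qed
  have bj: "1 \<le> j \<and> j \<le> r" using bd unfolding sconsts_def \<sigma> by auto
  show "2 \<le> e'" using isg io by auto
  show "e' \<le> us \<sigma>" "us \<sigma> \<le> s" using isg io bu unfolding us_def \<sigma> by auto
  show "1 \<le> cj \<sigma>" "cj \<sigma> \<le> r" using bj unfolding cj_def \<sigma> by auto
  show "length (Ls \<sigma>) = length (Js \<sigma>)" using isg unfolding Ls_def Js_def \<sigma> by simp
  show "\<forall>x\<in>set (Js \<sigma>). x < r"
  proof
    fix x assume "x \<in> set (Js \<sigma>)"
    then obtain c where c: "c \<in> set (drop (qidx cs) cs)" "x = snd c - 1" unfolding Js_def \<sigma> by auto
    have "c \<in> set cs" using c(1) by (rule in_set_dropD)
    thus "x < r" using bcs c(2) by auto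
  qed
  show "\<forall>x\<in>set (Ls \<sigma>). x < r" using bls unfolding Ls_def \<sigma> by auto
  have "sorted_wrt (\<lambda>x y. x - 1 < y - (1::nat)) ls"
    by (rule sorted_wrt_mono_rel[OF _ isg(6)]) (use bls in auto)
  thus "sorted_wrt (<) (Ls \<sigma>)" unfolding Ls_def \<sigma> by (simp add: sorted_wrt_map)
  show "sorted_wrt (<) (Js \<sigma>)"
  proof -
    have "\<forall>i i'. i < i' \<longrightarrow> i' < length (Js \<sigma>) \<longrightarrow> Js \<sigma> ! i < Js \<sigma> ! i'"
    proof (intro allI impI)
      fix i i' assume ii: "i < i'" "i' < length (Js \<sigma>)"
      let ?q = "qidx cs"
      have l: "length (Js \<sigma>) = length cs - ?q" unfolding Js_def \<sigma> by simp
      have "snd (cs!(?q+i)) < snd (cs!(?q+i'))"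
        using qidx_props(4)[OF isg(1,2), of "?q+i" "?q+i'"] ii l by auto
      moreover have "1 \<le> snd (cs!(?q+i))" using bcs ii l by auto
      ultimately show "Js \<sigma> ! i < Js \<sigma> ! i'" unfolding Js_def \<sigma> using ii l by auto
    qed
    thus ?thesis by (simp add: sorted_wrt_iff_nth_less)
  qed
qed

lemma holds_from:
  assumes g: "goodsig ar r s e' \<sigma>" and la: "length a = s" and lb: "\<forall>k<s. length (a!k) = r"
    and H: "lss (Gs fI \<sigma> (take (e'-1) a) (map (nth (a!(e'-1))) (Js \<sigma>))) (cvs e' \<sigma> (take (e'-1) a)) \<longrightarrow>
        Gs fI \<sigma> (take (e'-1) a) (map (nth (a!(e'-1))) (Js \<sigma>)) =
        Gs fI \<sigma> (take (e'-1) a) (map (nth (a!(us \<sigma> - 1))) (Ls \<sigma>))"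
  shows "holds fI lss a \<sigma>"
proof -
  obtain \<tau> cs j u ls where \<sigma>: "\<sigma> = (\<tau>, cs, j, u, ls)" by (cases \<sigma>) auto
  have isg: "cs \<noteq> []" "sorted_wrt lexless cs" "fst (last cs) > 1" "u \<ge> fst (last cs)"
     "length ls = length cs - qidx cs" "sorted_wrt (<) ls" "tvars \<tau> \<subseteq> {..<length cs}"
    using g unfolding goodsig_def is_sigma_def \<sigma> by auto
  have io: "fst (last cs) = e'" using g unfolding goodsig_def iota_def \<sigma> by auto
  let ?q = "qidx cs"
  let ?p = "take (e'-1) a"
  have bd: "\<forall>c\<in>sconsts \<sigma>. 1 \<le> fst c \<and> fst c \<le> s \<and> 1 \<le> snd c \<and> snd c \<le> r"
    using g unfolding goodsig_def by auto
  have bcs: "\<forall>c\<in>set cs. 1 \<le> fst c" using bd unfolding sconsts_def \<sigma> by auto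
  have avp: "aval a (cs!k) = aval ?p (cs!k)" if "k < ?q" for k
  proof -
    have "fst (cs!k) < e'" using qidx_props(2)[OF isg(1,2) that] io by simp
    moreover have "k < length cs" using that qidx_props(1)[OF isg(1,2)] by simp
    hence "1 \<le> fst (cs!k)" using bcs by auto
    ultimately show ?thesis unfolding aval_def by simp
  qed
  have qle: "?q \<le> length cs" using qidx_props(1)[OF isg(1,2)] by simp
  have Jn: "Js \<sigma> ! i = snd (cs!(?q+i)) - 1" if "i < length cs - ?q" for i
    unfolding Js_def \<sigma> using that qle by simp
  have lJ: "length (Js \<sigma>) = length cs - ?q" unfolding Js_def \<sigma> by simp
  have Ln: "Ls \<sigma> ! i = ls!i - 1" if "i < length ls" for i
    unfolding Ls_def \<sigma> using that by simp
  have lL: "length (Ls \<sigma>) = length ls" unfolding Ls_def \<sigma> by simp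
  have "tval fI (\<lambda>k. aval a (cs ! k)) \<tau> = tval fI (\<lambda>k. if k < ?q then aval ?p (cs!k)
       else (map (nth (a!(e'-1))) (Js \<sigma>))!(k - ?q)) \<tau>"
  proof (rule tval_cong)
    fix k assume "k \<in> tvars \<tau>"
    hence k: "k < length cs" using isg(7) by auto
    show "aval a (cs ! k) = (if k < ?q then aval ?p (cs!k)
       else (map (nth (a!(e'-1))) (Js \<sigma>))!(k - ?q))"
    proof (cases "k < ?q")
      case True thus ?thesis using avp by simp
    next
      case False
      have "fst (cs!k) = e'" using qidx_props(3)[OF isg(1,2)] False k io by simp
      moreover have "k - ?q < length cs - ?q" using False k by simp
      ultimately show ?thesis using False k Jn[of "k - ?q"] lJ unfolding aval_def by simp
    qed
  qed
  hence lhs: "tval fI (\<lambda>k. aval a (cs ! k)) \<tau> = Gs fI \<sigma> ?p (map (nth (a!(e'-1))) (Js \<sigma>))"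
    unfolding Gs_def \<sigma> by simp
  have "tval fI (\<lambda>k. aval a ((take ?q cs @ map (\<lambda>l. (u, l)) ls) ! k)) \<tau>
      = tval fI (\<lambda>k. if k < ?q then aval ?p (cs!k)
       else (map (nth (a!(us \<sigma> - 1))) (Ls \<sigma>))!(k - ?q)) \<tau>"
  proof (rule tval_cong)
    fix k assume "k \<in> tvars \<tau>"
    hence k: "k < length cs" using isg(7) by auto
    show "aval a ((take ?q cs @ map (\<lambda>l. (u, l)) ls) ! k) = (if k < ?q then aval ?p (cs!k)
       else (map (nth (a!(us \<sigma> - 1))) (Ls \<sigma>))!(k - ?q))"
    proof (cases "k < ?q")
      case True thus ?thesis using avp qle by (simp add: nth_append)
    next
      case False
      have kl: "k - ?q < length ls" using isg(5) k False by simp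
      thus ?thesis using False qle Ln[OF kl] lL unfolding aval_def us_def \<sigma> by (simp add: nth_append)
    qed
  qed
  hence rhs: "tval fI (\<lambda>k. aval a ((take ?q cs @ map (\<lambda>l. (u, l)) ls) ! k)) \<tau>
         = Gs fI \<sigma> ?p (map (nth (a!(us \<sigma> - 1))) (Ls \<sigma>))"
    unfolding Gs_def \<sigma> by simp
  have cv: "aval a (fst (last cs) - 1, j) = cvs e' \<sigma> ?p"
    unfolding cvs_def \<sigma> aval_def using io isg(3) by simp
  show ?thesis unfolding holds_def \<sigma> Let_def
    using H lhs rhs cv by (simp add: \<sigma>)
qed


lemma kzero_le: "kzero \<le> (x::'k::wellorder)"
  unfolding kzero_def by (rule Least_le) simp

lemma not_lt_kzero: "\<not> (x::'k::wellorder) < kzero"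
  using kzero_le[of x] by auto

lemma incr_mono: "X \<subseteq> Y \<Longrightarrow> incr lss r X \<subseteq> incr lss r Y"
  unfolding incr_def by auto

lemma sorted_wrt_distinct: "sorted_wrt R xs \<Longrightarrow> (\<forall>x. \<not> R x x) \<Longrightarrow> distinct xs"
  by (induction xs) auto

lemma sorted_wrt_unique:
  assumes irr: "\<forall>x. \<not> R x x" and trn: "\<forall>x y z. R x y \<longrightarrow> R y z \<longrightarrow> R x z"
  shows "sorted_wrt R xs \<Longrightarrow> sorted_wrt R ys \<Longrightarrow> set xs = set ys \<Longrightarrow> xs = ys"
proof (induction xs arbitrary: ys)
  case Nil thus ?case by simp
next
  case (Cons x xs)
  then obtain y ys' where ys: "ys = y # ys'" by (cases ys) auto
  have xy: "x = y"
  proof (rule ccontr)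
    assume ne: "x \<noteq> y"
    have "y \<in> set xs" using Cons.prems(3) ys ne by (metis insertI1 set_ConsD list.simps(15))
    hence "R x y" using Cons.prems(1) by simp
    moreover have "x \<in> set ys'" using Cons.prems(3) ys ne by (metis insertI1 set_ConsD list.simps(15))
    hence "R y x" using Cons.prems(2) ys by simp
    ultimately show False using irr trn by blast
  qed
  have "x \<notin> set xs" using Cons.prems(1) irr by auto
  moreover have "y \<notin> set ys'" using Cons.prems(2) irr ys by auto
  ultimately have "set xs = set ys'" using Cons.prems(3) ys xy by auto
  hence "xs = ys'" using Cons.IH Cons.prems ys by auto
  thus ?case using xy ys by simp
qed

definition slist :: "('m \<Rightarrow> 'm \<Rightarrow> bool) \<Rightarrow> 'm set \<Rightarrow> 'm list" where
  "slist lss z = (THE xs. set xs = z \<and> sorted_wrt lss xs)"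

lemma slist_eq:
  assumes irr: "\<forall>x. \<not> lss x x" and trn: "\<forall>x y z. lss x y \<longrightarrow> lss y z \<longrightarrow> lss x z"
    and so: "sorted_wrt lss xs"
  shows "slist lss (set xs) = xs"
  unfolding slist_def
proof (rule the_equality)
  show "set xs = set xs \<and> sorted_wrt lss xs" using so by simp
  fix ys assume "set ys = set xs \<and> sorted_wrt lss ys"
  thus "ys = xs" using sorted_wrt_unique[OF irr trn] so by metis
qed

lemma sub_sorted:
  assumes b: "sorted_wrt lss b" "length b = r" and P: "sorted_wrt (<) P" "\<forall>x\<in>set P. x < r"
  shows "sorted_wrt lss (map (nth b) P)" "set (map (nth b) P) \<subseteq> set b"
proof -
  show "sorted_wrt lss (map (nth b) P)"
  proof (unfold sorted_wrt_iff_nth_less, intro allI impI)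
    fix i j assume ij: "i < j" "j < length (map (nth b) P)"
    have "P!i < P!j" using P(1) ij by (simp add: sorted_wrt_iff_nth_less)
    moreover have "P!j < r" using P(2) ij by simp
    ultimately show "lss (map (nth b) P ! i) (map (nth b) P ! j)"
      using b ij by (simp add: sorted_wrt_iff_nth_less)
  qed
  show "set (map (nth b) P) \<subseteq> set b" using P(2) b(2) by auto
qed

definition colf :: "('f \<Rightarrow> 'm list \<Rightarrow> 'm) \<Rightarrow> ('m \<Rightarrow> 'm \<Rightarrow> bool) \<Rightarrow> nat \<Rightarrow> 'm list list set
    \<Rightarrow> 'f sent \<Rightarrow> 'm set \<Rightarrow> 'm list list \<Rightarrow> 'm option" where
  "colf fI lss e' P \<sigma> z = (\<lambda>p. if p \<in> P \<and> lss (Gs fI \<sigma> p (slist lss z)) (cvs e' \<sigma> p)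
       then Some (Gs fI \<sigma> p (slist lss z)) else None)"

lemma hom_holds:
  assumes irr: "\<forall>x. \<not> lss x x" and trn: "\<forall>x y z. lss x y \<longrightarrow> lss y z \<longrightarrow> lss x z"
    and g: "goodsig ar r s e' \<sigma>"
    and H1: "HCg cl H1 \<gamma>s" and H2: "HCg cl H2 \<gamma>s" and idx: "idx < length \<sigma>s" "\<sigma> = \<sigma>s!idx"
    and cl: "cl = map (\<lambda>\<sigma>. (length (Js \<sigma>), colf fI lss e' P \<sigma>)) \<sigma>s"
    and p: "p \<in> P" and b: "b \<in> incr lss r H1" and b': "b' \<in> incr lss r H2"
  shows "lss (Gs fI \<sigma> p (map (nth b) (Js \<sigma>))) (cvs e' \<sigma> p) \<longrightarrow>
         Gs fI \<sigma> p (map (nth b) (Js \<sigma>)) = Gs fI \<sigma> p (map (nth b') (Ls \<sigma>))"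
proof
  let ?zs = "map (nth b) (Js \<sigma>)"
  let ?zs' = "map (nth b') (Ls \<sigma>)"
  let ?m = "length (Js \<sigma>)"
  note sp = sent_pos[OF g]
  have bb: "sorted_wrt lss b" "length b = r" "set b \<subseteq> H1" using b unfolding incr_def by auto
  have bb': "sorted_wrt lss b'" "length b' = r" "set b' \<subseteq> H2" using b' unfolding incr_def by auto
  have z1: "sorted_wrt lss ?zs" "set ?zs \<subseteq> set b" using sub_sorted[OF bb(1,2) sp(1,2)] by auto
  have z2: "sorted_wrt lss ?zs'" "set ?zs' \<subseteq> set b'" using sub_sorted[OF bb'(1,2) sp(3,4)] by auto
  have irr': "\<forall>x. \<not> lss x x" using irr by blast
  have d1: "distinct ?zs" using sorted_wrt_distinct[OF z1(1) irr'] .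
  have d2: "distinct ?zs'" using sorted_wrt_distinct[OF z2(1) irr'] .
  have m1: "set ?zs \<in> msets H1 ?m" unfolding msets_def using z1(2) bb(3) distinct_card[OF d1] by auto
  have m2: "set ?zs' \<in> msets H2 ?m" unfolding msets_def using z2(2) bb'(3) distinct_card[OF d2] sp(5) by auto
  have clidx: "cl!idx = (?m, colf fI lss e' P \<sigma>)" using cl idx by simp
  have lcl: "idx < length cl" using cl idx by simp
  have c1: "colf fI lss e' P \<sigma> (set ?zs) = \<gamma>s!idx" using H1 lcl m1 clidx unfolding HCg_def by fastforce
  have c2: "colf fI lss e' P \<sigma> (set ?zs') = \<gamma>s!idx" using H2 lcl m2 clidx unfolding HCg_def by fastforce
  have s1: "slist lss (set ?zs) = ?zs" using slist_eq[OF irr trn z1(1)] .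
  have s2: "slist lss (set ?zs') = ?zs'" using slist_eq[OF irr trn z2(1)] .
  assume lt: "lss (Gs fI \<sigma> p ?zs) (cvs e' \<sigma> p)"
  have "colf fI lss e' P \<sigma> (set ?zs) p = Some (Gs fI \<sigma> p ?zs)" unfolding colf_def s1 using p lt by simp
  hence "colf fI lss e' P \<sigma> (set ?zs') p = Some (Gs fI \<sigma> p ?zs)" using c1 c2 by simp
  hence "(if p \<in> P \<and> lss (Gs fI \<sigma> p ?zs') (cvs e' \<sigma> p) then Some (Gs fI \<sigma> p ?zs') else None) = Some (Gs fI \<sigma> p ?zs)"
    unfolding colf_def s2 .
  thus "Gs fI \<sigma> p ?zs = Gs fI \<sigma> p ?zs'" by (simp split: if_splits)
qed


lemma Fseqs_block:
  assumes ys: "ys \<in> Fseqs lss F r f (\<Union>i\<in>I. Y i)" and c: "c \<in> set ys" and r: "0 < r"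
    and YF: "\<forall>i\<in>I. Y i \<subseteq> {a. F a = T i}" and inj: "inj_on T I"
  shows "\<exists>i\<in>I. c \<in> incr lss r (Y i)"
proof -
  have cb: "c \<in> incr lss r (\<Union>i\<in>I. Y i)" "\<forall>y\<in>set c. F y = F (hd c)"
    using ys c unfolding Fseqs_def by auto
  have lc: "length c = r" and sc: "set c \<subseteq> (\<Union>i\<in>I. Y i)" using cb(1) unfolding incr_def by auto
  hence "c \<noteq> []" using r by auto
  hence "hd c \<in> set c" by simp
  then obtain i where i: "i \<in> I" "hd c \<in> Y i" using sc by blast
  have "set c \<subseteq> Y i"
  proof
    fix y assume y: "y \<in> set c"
    then obtain i' where i': "i' \<in> I" "y \<in> Y i'" using sc by blast
    have "y \<in> {a. F a = T i'}" using subsetD[OF YF[rule_format, OF i'(1)] i'(2)] .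
    hence "T i' = F y" by simp
    also have "\<dots> = F (hd c)" using cb(2) y by blast
    also have "\<dots> = T i" using subsetD[OF YF[rule_format, OF i(1)] i(2)] by simp
    finally have "i' = i" using inj i i' unfolding inj_on_def by blast
    thus "y \<in> Y i" using i' by simp
  qed
  thus ?thesis using i cb(1) unfolding incr_def by auto
qed

lemma prodS:
  assumes SP: "{xs @ ys | xs ys. length xs = e \<and> (\<forall>k<e. xs!k \<in> incr lss r (X k)) \<and>
                 ys \<in> Fseqs lss F r (s - e) (\<Union>i\<in>{i. i \<noteq> kzero}. Y i)} \<subseteq> S"
    and r: "0 < r" and ee: "e < e'" "e' \<le> s"
    and Xlow: "\<forall>k<e. X' k = X k"
    and Xmid: "\<forall>k. e \<le> k \<and> k < e' \<longrightarrow> X' k \<subseteq> (\<Union>i\<in>{i. i \<noteq> kzero}. Y i) \<and> X' k \<subseteq> {a. F a = B k}"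
    and Bmono: "\<forall>k k'. e \<le> k \<and> k < k' \<and> k' < e' \<longrightarrow> (B k :: 'k::wellorder) < B k'"
    and Ytail: "\<forall>i. i \<noteq> kzero \<longrightarrow> Y' i \<subseteq> (\<Union>i\<in>{i. i \<noteq> kzero}. Y i) \<and> Y' i \<subseteq> {a. F a = T' i}"
    and Tbig: "\<forall>i. i \<noteq> kzero \<longrightarrow> B (e' - 1) < T' i"
  shows "{xs @ ys | xs ys. length xs = e' \<and> (\<forall>k<e'. xs!k \<in> incr lss r (X' k)) \<and>
                 ys \<in> Fseqs lss F r (s - e') (\<Union>i\<in>{i. i \<noteq> kzero}. Y' i)} \<subseteq> S"
proof
  fix a assume "a \<in> {xs @ ys | xs ys. length xs = e' \<and> (\<forall>k<e'. xs!k \<in> incr lss r (X' k)) \<and>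
                 ys \<in> Fseqs lss F r (s - e') (\<Union>i\<in>{i. i \<noteq> kzero}. Y' i)}"
  then obtain xs ys where a: "a = xs @ ys" and lx: "length xs = e'"
    and xk: "\<forall>k<e'. xs!k \<in> incr lss r (X' k)"
    and ys: "ys \<in> Fseqs lss F r (s - e') (\<Union>i\<in>{i. i \<noteq> kzero}. Y' i)" by blast
  let ?U = "\<Union>i\<in>{i. i \<noteq> kzero}. Y i"
  let ?xs1 = "take e xs" and ?ys1 = "drop e xs @ ys"
  have a1: "a = ?xs1 @ ?ys1" using a by simp
  have l1: "length ?xs1 = e" using lx ee by simp
  have x1: "\<forall>k<e. ?xs1!k \<in> incr lss r (X k)"
  proof (intro allI impI)
    fix k assume k: "k < e"
    hence "xs!k \<in> incr lss r (X' k)" using xk ee by auto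
    thus "?xs1!k \<in> incr lss r (X k)" using Xlow k by simp
  qed
  have ysF: "length ys = s - e'" "\<forall>b\<in>set ys. b \<in> incr lss r (\<Union>i\<in>{i. i \<noteq> kzero}. Y' i) \<and> (\<forall>y\<in>set b. F y = F (hd b))"
     "sorted_wrt (\<lambda>b c. F (hd b) < F (hd c)) ys" using ys unfolding Fseqs_def by auto
  have Y'U: "(\<Union>i\<in>{i. i \<noteq> kzero}. Y' i) \<subseteq> ?U" using Ytail by blast
  have dn: "drop e xs ! i = xs ! (e + i)" if "i < e' - e" for i using that lx by simp
  have ld: "length (drop e xs) = e' - e" using lx by simp
  have hdF: "F (hd (xs!k)) = B k" if "e \<le> k" "k < e'" for k
  proof -
    have "length (xs!k) = r" "set (xs!k) \<subseteq> X' k" using xk that unfolding incr_def by auto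
    hence "hd (xs!k) \<in> X' k" using r by (cases "xs!k") auto
    thus ?thesis using Xmid that by blast
  qed
  have blk_mid: "b \<in> incr lss r ?U \<and> (\<forall>y\<in>set b. F y = F (hd b))" if bd: "b \<in> set (drop e xs)" for b
  proof -
    obtain i where i0: "i < length (drop e xs)" "drop e xs ! i = b" using in_set_conv_nth[THEN iffD1, OF bd] by (elim exE conjE)
    hence i: "i < e' - e" "b = xs!(e+i)" using ld dn by auto
    have k: "e \<le> e+i" "e+i < e'" using i by auto
    have bi: "b \<in> incr lss r (X' (e+i))" using xk k i by auto
    moreover have "X' (e+i) \<subseteq> ?U" using Xmid k by blast
    ultimately have "b \<in> incr lss r ?U" using incr_mono by blast
    moreover have "\<forall>y\<in>set b. F y = F (hd b)"
    proof
      fix y assume "y \<in> set b"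
      hence "y \<in> X' (e+i)" using bi unfolding incr_def by blast
      moreover have "X' (e+i) \<subseteq> {a. F a = B (e+i)}" using Xmid k by blast
      ultimately have "F y = B (e+i)" by blast
      thus "F y = F (hd b)" using hdF[OF k] i by simp
    qed
    ultimately show ?thesis by blast
  qed
  have ys1: "?ys1 \<in> Fseqs lss F r (s - e) ?U"
    unfolding Fseqs_def
  proof (rule CollectI, intro conjI)
    show "length ?ys1 = s - e" using ld ysF(1) ee by simp
  next
    show "\<forall>b\<in>set ?ys1. b \<in> incr lss r ?U \<and> (\<forall>y\<in>set b. F y = F (hd b))"
    proof
    fix b assume "b \<in> set ?ys1"
    hence "b \<in> set (drop e xs) \<or> b \<in> set ys" by auto
    thus "b \<in> incr lss r ?U \<and> (\<forall>y\<in>set b. F y = F (hd b))"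
    proof
      assume "b \<in> set (drop e xs)" thus ?thesis by (rule blk_mid)
    next
      assume "b \<in> set ys"
      hence "b \<in> incr lss r (\<Union>i\<in>{i. i \<noteq> kzero}. Y' i) \<and> (\<forall>y\<in>set b. F y = F (hd b))"
        using ysF(2) by blast
      thus ?thesis using incr_mono[OF Y'U] by blast
    qed
    qed
  next
    show "sorted_wrt (\<lambda>b c. F (hd b) < F (hd c)) ?ys1"
      unfolding sorted_wrt_append
    proof (intro conjI ballI)
      show "sorted_wrt (\<lambda>b c. F (hd b) < F (hd c)) (drop e xs)"
      proof (unfold sorted_wrt_iff_nth_less, intro allI impI)
        fix i j assume "i < j" "j < length (drop e xs)"
        thus "F (hd (drop e xs ! i)) < F (hd (drop e xs ! j))"
          using dn ld hdF Bmono by simp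
      qed
      show "sorted_wrt (\<lambda>b c. F (hd b) < F (hd c)) ys" by (rule ysF(3))
      fix b c assume b: "b \<in> set (drop e xs)" and c: "c \<in> set ys"
      obtain i where i0: "i < length (drop e xs)" "drop e xs ! i = b" using in_set_conv_nth[THEN iffD1, OF b] by (elim exE conjE)
      hence i: "i < e' - e" "b = xs!(e+i)" using ld dn by auto
      have k: "e \<le> e+i" "e+i < e'" using i by auto
      have Fb: "F (hd b) = B (e+i)" using hdF[OF k] i by simp
      have "B (e+i) \<le> B (e' - 1)"
      proof (cases "e+i = e'-1")
        case False thus ?thesis using Bmono k by (intro less_imp_le) auto
      qed simp
      moreover have "c \<in> incr lss r (\<Union>i\<in>{i. i \<noteq> kzero}. Y' i)" using ysF(2) c by blast
      hence "length c = r" "set c \<subseteq> (\<Union>i\<in>{i. i \<noteq> kzero}. Y' i)" unfolding incr_def by auto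
      hence "hd c \<in> (\<Union>i\<in>{i. i \<noteq> kzero}. Y' i)" using r by (cases c) auto
      then obtain i' where i': "i' \<noteq> kzero" "hd c \<in> Y' i'" by blast
      have "Y' i' \<subseteq> {a. F a = T' i'}" using Ytail i'(1) by blast
      hence "F (hd c) = T' i'" using i'(2) by blast
      moreover have "B (e' - 1) < T' i'" using Tbig i'(1) by blast
      ultimately show "F (hd b) < F (hd c)" using Fb \<open>B (e+i) \<le> B (e' - 1)\<close> by simp
    qed
  qed
  have "?xs1 @ ?ys1 \<in> {xs @ ys | xs ys. length xs = e \<and> (\<forall>k<e. xs!k \<in> incr lss r (X k)) \<and>
                 ys \<in> Fseqs lss F r (s - e) (\<Union>i\<in>{i. i \<noteq> kzero}. Y i)}"
    by (rule CollectI, rule exI[of _ ?xs1], rule exI[of _ ?ys1]) (intro conjI refl l1 x1 ys1)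
  thus "a \<in> S" using SP unfolding a1 by (rule subsetD[rotated])
qed


context inacc begin

lemma exists_nonzero: "\<exists>i::'k. i \<noteq> kzero"
proof (rule ccontr)
  assume "\<not> (\<exists>i::'k. i \<noteq> kzero)"
  hence "(UNIV::'k set) = {kzero}" by auto
  hence "finite (UNIV::'k set)" by (metis finite.emptyI finite.insertI)
  thus False using k_infinite by (rule notE[rotated])
qed

lemma final_step:
  fixes Y :: "'k \<Rightarrow> 'a set" and cl :: "(nat \<times> ('a set \<Rightarrow> 'c)) list"
  assumes unb: "\<forall>b \<mu>. \<exists>i. b < i \<and> |{x::'k. x<\<mu>}| \<le>o |Y i|"
    and CS: "small CS" and rg: "\<forall>mc\<in>set cl. range (snd mc) \<subseteq> CS"
  shows "\<exists>(R::'k\<Rightarrow>'k) Xf Yt \<gamma>s. strict_mono R \<and> i0 < R kzero \<and> Xf \<subseteq> Y (R kzero) \<and>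
     |Xf| =o |{x::'k. x<\<mu>0}| \<and> (\<forall>i. Yt i \<subseteq> Y (R i)) \<and>
     (\<forall>m. \<exists>i. i \<noteq> kzero \<and> card_of {x::'k. x<m} \<le>o card_of (Yt i)) \<and> HCg cl Xf \<gamma>s \<and> (\<forall>i. HCg cl (Yt i) \<gamma>s)"
proof -
  obtain \<gamma>s where g: "length \<gamma>s = length cl" "set \<gamma>s \<subseteq> CS"
     "\<forall>(b::'k) \<mu>. \<exists>i. b < i \<and> (\<exists>H\<subseteq>(Y i). |{x::'k. x<\<mu>}| \<le>o |H| \<and> HCg cl H \<gamma>s)"
    using pigeon[OF CS rg unb] by (elim exE conjE)
  define sz where "sz = (\<lambda>i::'k. if i = kzero then \<mu>0 else i)"
  define Pr where "Pr = (\<lambda>i l. i0 < l \<and> (\<exists>H\<subseteq>Y l. |{x::'k. x<sz i}| \<le>o |H| \<and> HCg cl H \<gamma>s))"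
  have ex: "\<forall>i (b::'k). \<exists>l. b < l \<and> Pr i l"
  proof (intro allI)
    fix i b :: 'k
    obtain l where l: "max b i0 < l \<and> (\<exists>H\<subseteq>(Y l). |{x::'k. x<sz i}| \<le>o |H| \<and> HCg cl H \<gamma>s)"
      using g(3)[THEN spec[of _ "max b i0"], THEN spec[of _ "sz i"]] by (elim exE)
    thus "\<exists>l. b < l \<and> Pr i l" unfolding Pr_def by (intro exI[of _ l]) auto
  qed
  obtain R where R: "strict_mono R" "\<forall>i. Pr i (R i)" using enum_exists[OF ex] by (elim exE conjE)
  define Yt where "Yt = (\<lambda>i. SOME H. H \<subseteq> Y (R i) \<and> |{x::'k. x<sz i}| \<le>o |H| \<and> HCg cl H \<gamma>s)"
  have Yt: "Yt i \<subseteq> Y (R i) \<and> |{x::'k. x<sz i}| \<le>o |(Yt i)| \<and> HCg cl (Yt i) \<gamma>s" for i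
  proof -
    have "\<exists>H. H \<subseteq> Y (R i) \<and> |{x::'k. x<sz i}| \<le>o |H| \<and> HCg cl H \<gamma>s"
      using R(2) unfolding Pr_def by blast
    thus ?thesis unfolding Yt_def by (rule someI_ex)
  qed
  have "|{x::'k. x<\<mu>0}| \<le>o |(Yt kzero)|" using Yt[of kzero] unfolding sz_def by simp
  then obtain Xf where Xf: "Xf \<subseteq> Yt kzero" "|Xf| =o |{x::'k. x<\<mu>0}|"
    using exact_subset by blast
  have i0: "i0 < R kzero" using R(2) unfolding Pr_def by blast
  have sup: "\<forall>m. \<exists>i. i \<noteq> kzero \<and> |{x::'k. x<m}| \<le>o |(Yt i)|"
  proof
    fix m :: 'k
    show "\<exists>i. i \<noteq> kzero \<and> |{x::'k. x<m}| \<le>o |(Yt i)|"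
    proof (cases "m = kzero")
      case True
      obtain i :: 'k where i: "i \<noteq> kzero" using exists_nonzero by blast
      have "{x::'k. x<m} = {}" using True not_lt_kzero by auto
      hence "|{x::'k. x<m}| \<le>o |(Yt i)|" using card_of_empty by simp
      thus ?thesis using i by blast
    next
      case False
      thus ?thesis using Yt[of m] unfolding sz_def by auto
    qed
  qed
  have "Xf \<subseteq> Y (R kzero)" using Xf(1) Yt[of kzero] by blast
  moreover have "HCg cl Xf \<gamma>s" using Yt[of kzero] Xf(1) HCg_subset by blast
  moreover have "\<forall>i. Yt i \<subseteq> Y (R i)" "\<forall>i. HCg cl (Yt i) \<gamma>s" using Yt by blast+
  ultimately have fin: "Xf \<subseteq> Y (R kzero)" "HCg cl Xf \<gamma>s" "\<forall>i. Yt i \<subseteq> Y (R i)" "\<forall>i. HCg cl (Yt i) \<gamma>s"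
    by blast+
  show ?thesis
  proof (intro exI conjI)
    show "strict_mono R" by (rule R(1))
    show "i0 < R kzero" by (rule i0)
    show "Xf \<subseteq> Y (R kzero)" by (rule fin(1))
    show "|Xf| =o |{x::'k. x<\<mu>0}|" by (rule Xf(2))
    show "\<forall>i. Yt i \<subseteq> Y (R i)" by (rule fin(3))
    show "\<forall>m. \<exists>i. i \<noteq> kzero \<and> |{x::'k. x<m}| \<le>o |Yt i|" by (rule sup)
    show "HCg cl Xf \<gamma>s" by (rule fin(2))
    show "\<forall>i. HCg cl (Yt i) \<gamma>s" by (rule fin(4))
  qed
qed

end


lemma strict_mono_o: "strict_mono (T::'a::order \<Rightarrow> 'b::order) \<Longrightarrow> strict_mono (R::'c::order \<Rightarrow> 'a) \<Longrightarrow> strict_mono (T \<circ> R)"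
  by (simp add: strict_mono_def)

lemma chain_mono:
  assumes st: "\<forall>k. a \<le> k \<and> Suc k < b \<longrightarrow> (f k :: 'a::order) < f (Suc k)"
  shows "a \<le> k \<Longrightarrow> k < k' \<Longrightarrow> k' < b \<Longrightarrow> f k < f k'"
proof (induction k')
  case 0 thus ?case by simp
next
  case (Suc k')
  show ?case
  proof (cases "k = k'")
    case True thus ?thesis using st Suc.prems by auto
  next
    case False
    hence "f k < f k'" using Suc by auto
    also have "f k' < f (Suc k')" using st Suc.prems False by auto
    finally show ?thesis .
  qed
qed

locale mctx = inacc tk for tk :: "'k::wellorder itself" +
  fixes lss :: "'m \<Rightarrow> 'm \<Rightarrow> bool" and F :: "'m \<Rightarrow> 'k" and Lv :: "'k \<Rightarrow> 'm set"
  assumes irr: "\<forall>x. \<not> lss x x" and trn: "\<forall>x y z. lss x y \<longrightarrow> lss y z \<longrightarrow> lss x z"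
    and smallL: "\<forall>i. small (Lv i)" and memL: "\<forall>a. a \<in> Lv (F a)"
    and below: "\<forall>v c. lss v c \<longrightarrow> v \<in> Lv (F c)"
begin

lemma one_play:
  fixes T :: "'k \<Rightarrow> 'k" and Bt :: "nat \<Rightarrow> 'k" and X :: "nat \<Rightarrow> 'm set" and Y :: "'k \<Rightarrow> 'm set"
    and \<iota>k :: "nat \<Rightarrow> 'k" and Xmid :: "nat \<Rightarrow> 'm set" and R :: "'k \<Rightarrow> 'k" and Xf :: "'m set"
    and Yt :: "'k \<Rightarrow> 'm set" and beta' :: "nat \<Rightarrow> 'k" and mus' :: "'k list"
  assumes r: "0 < r" and e: "1 \<le> e" "e < e'" "e' \<le> s" and lm: "length mus' = e'"
    and sig: "\<forall>\<sigma>\<in>set \<sigma>s. goodsig ar r s e' \<sigma>"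
    and Bmono: "\<forall>k. Suc k < e \<longrightarrow> Bt k < Bt (Suc k)" and Be: "Bt (e-1) = T kzero" and Tm: "strict_mono T"
    and Xs: "\<forall>k<e. X k \<subseteq> {a. F a = Bt k} \<and> |X k| =o |{x::'k. x < mus'!k}|"
    and Ys: "\<forall>i. i \<noteq> kzero \<longrightarrow> Y i \<subseteq> {a. F a = T i}"
    and SP: "{xs @ ys | xs ys. length xs = e \<and> (\<forall>k<e. xs!k \<in> incr lss r (X k)) \<and>
               ys \<in> Fseqs lss F r (s - e) (\<Union>i\<in>{i. i \<noteq> kzero}. Y i)} \<subseteq> S"
    and \<iota>0: "\<iota>k (e-1) = kzero" and \<iota>s: "\<forall>k. e \<le> k \<and> k < e' \<longrightarrow> \<iota>k (k-1) < \<iota>k k"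
    and Xm: "\<forall>k. e \<le> k \<and> k < e'-1 \<longrightarrow> Xmid k \<subseteq> Y (\<iota>k k) \<and> |Xmid k| =o |{x::'k. x < mus'!k}|"
    and Pdef: "P = {p. length p = e'-1 \<and> (\<forall>k<e'-1. p!k \<in> incr lss r (if k < e then X k else Xmid k))}"
    and cldef: "cl = map (\<lambda>\<sigma>. (length (Js \<sigma>), colf fI lss e' P \<sigma>)) \<sigma>s"
    and R: "strict_mono R" "\<iota>k (e'-2) < R kzero"
    and Xf: "Xf \<subseteq> Y (R kzero)" "|Xf| =o |{x::'k. x < mus'!(e'-1)}|"
    and Yt: "\<forall>i. Yt i \<subseteq> Y (R i)" "\<forall>m. \<exists>i. i \<noteq> kzero \<and> |{x::'k. x<m}| \<le>o |Yt i|"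
    and hc: "HCg cl Xf \<gamma>s" "\<forall>i. HCg cl (Yt i) \<gamma>s"
    and bdef: "\<forall>k. beta' k = (if Suc k < e' then (if Suc k < e then Bt k else T (\<iota>k k)) else T (R kzero))"
  shows "game_win lss F r s e' {a\<in>S. \<forall>\<sigma>\<in>set \<sigma>s. holds fI lss a \<sigma>} mus' beta' (T \<circ> R)"
proof -
  have \<iota>step: "\<forall>k. e-1 \<le> k \<and> Suc k < e' \<longrightarrow> \<iota>k k < \<iota>k (Suc k)"
  proof (intro allI impI)
    fix k assume k: "e-1 \<le> k \<and> Suc k < e'"
    hence "e \<le> Suc k \<and> Suc k < e'" using e by auto
    hence "\<iota>k (Suc k - 1) < \<iota>k (Suc k)" using \<iota>s by blast
    thus "\<iota>k k < \<iota>k (Suc k)" by simp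
  qed
  have \<iota>nz: "\<iota>k k \<noteq> kzero" if "e \<le> k" "k < e'" for k
  proof -
    have "\<iota>k (e-1) < \<iota>k k" using chain_mono[OF \<iota>step, of "e-1" k] that e by auto
    thus ?thesis using \<iota>0 by auto
  qed
  have Rnz: "R i \<noteq> kzero" for i
  proof -
    have "kzero \<le> \<iota>k (e'-2)" by (rule kzero_le)
    also have "\<iota>k (e'-2) < R kzero" by (rule R(2))
    also have "R kzero \<le> R i" using R(1) kzero_le[of i] by (metis strict_mono_less_eq)
    finally show ?thesis by simp
  qed
  have Rgt: "R kzero < R i" if "i \<noteq> kzero" for i
  proof -
    have "kzero < i" using that kzero_le[of i] by auto
    thus ?thesis using R(1) by (simp add: strict_mono_less)
  qed
  define lev where "lev = (\<lambda>k. if Suc k < e then Bt k else T (\<iota>k k))"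
  have bet: "beta' k = lev k" if "Suc k < e'" for k using bdef that unfolding lev_def by simp
  have betl: "beta' (e'-1) = T (R kzero)" using bdef e by simp
  have levstep: "\<forall>k. 0 \<le> k \<and> Suc k < e'-1 \<longrightarrow> lev k < lev (Suc k)"
  proof (intro allI impI)
    fix k assume k: "0 \<le> k \<and> Suc k < e'-1"
    show "lev k < lev (Suc k)"
    proof (cases "Suc (Suc k) < e")
      case True thus ?thesis unfolding lev_def using Bmono by simp
    next
      case F1: False
      show ?thesis
      proof (cases "Suc k < e")
        case True
        hence "Suc k = e - 1" using F1 by simp
        hence "lev (Suc k) = Bt (Suc k)" unfolding lev_def using \<iota>0 Be F1 by simp
        moreover have "lev k = Bt k" unfolding lev_def using True by simp
        ultimately show ?thesis using Bmono True by simp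
      next
        case False
        hence "e - 1 \<le> k \<and> Suc k < e'" using k by auto
        hence "\<iota>k k < \<iota>k (Suc k)" using \<iota>step by blast
        thus ?thesis unfolding lev_def using False Tm by (simp add: strict_mono_less)
      qed
    qed
  qed
  have betstep: "\<forall>k. 0 \<le> k \<and> Suc k < e' \<longrightarrow> beta' k < beta' (Suc k)"
  proof (intro allI impI)
    fix k assume k: "0 \<le> k \<and> Suc k < e'"
    show "beta' k < beta' (Suc k)"
    proof (cases "Suc (Suc k) < e'")
      case True thus ?thesis using bet levstep k by simp
    next
      case False
      hence kk: "k = e' - 2" "Suc k = e'-1" using k by auto
      have nk: "\<not> Suc k < e" using kk e by linarith
      have "beta' k = lev k" using bet[of k] k by simp
      also have "\<dots> = T (\<iota>k k)" unfolding lev_def using nk by simp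
      finally have "beta' k = T (\<iota>k (e'-2))" using kk by simp
      moreover have "beta' (Suc k) = T (R kzero)" using betl kk by simp
      ultimately show ?thesis using R(2) Tm by (simp add: strict_mono_less)
    qed
  qed
  have betmono: "beta' k < beta' k'" if "k < k'" "k' < e'" for k k'
    using chain_mono[OF betstep, of k k'] that by simp
  define X' where "X' = (\<lambda>k. if k < e'-1 then (if k < e then X k else Xmid k) else Xf)"
  have X'F: "X' k \<subseteq> {a. F a = beta' k}" if "k < e'" for k
  proof (cases "k < e'-1")
    case True
    show ?thesis
    proof (cases "k < e")
      case True
      have "beta' k = Bt k"
      proof (cases "Suc k < e")
        case True thus ?thesis using bet[of k] \<open>k < e'-1\<close> unfolding lev_def by simp
      next
        case False
        hence ke: "k = e-1" using \<open>k<e\<close> by simp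
        have "beta' k = lev k" using bet[of k] \<open>k < e'-1\<close> by simp
        also have "\<dots> = T (\<iota>k k)" unfolding lev_def using False by simp
        also have "\<dots> = Bt k" using ke \<iota>0 Be by simp
        finally show ?thesis .
      qed
      thus ?thesis unfolding X'_def using Xs \<open>k<e\<close> \<open>k < e'-1\<close> by simp
    next
      case False
      have "beta' k = T (\<iota>k k)" using bet[of k] \<open>k < e'-1\<close> False unfolding lev_def by simp
      moreover have "Xmid k \<subseteq> Y (\<iota>k k)" using Xm False \<open>k < e'-1\<close> by simp
      moreover have "Y (\<iota>k k) \<subseteq> {a. F a = T (\<iota>k k)}" using Ys \<iota>nz[of k] False that by simp
      ultimately show ?thesis unfolding X'_def using False \<open>k < e'-1\<close> by auto
    qed
  next
    case False
    hence "k = e'-1" using that by simp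
    moreover have "Y (R kzero) \<subseteq> {a. F a = T (R kzero)}" using Ys Rnz by simp
    ultimately show ?thesis unfolding X'_def using Xf(1) betl by auto
  qed
  have X'c: "|X' k| =o |{x::'k. x < mus'!k}|" if "k < e'" for k
  proof (cases "k < e'-1")
    case True thus ?thesis unfolding X'_def using Xs Xm that by (cases "k < e") auto
  next
    case False
    hence "k = e'-1" using that by simp
    thus ?thesis unfolding X'_def using Xf(2) by simp
  qed
  have X'U: "X' k \<subseteq> (\<Union>i\<in>{i. i \<noteq> kzero}. Y i)" if "e \<le> k" "k < e'" for k
  proof (cases "k < e'-1")
    case True
    hence "X' k \<subseteq> Y (\<iota>k k)" unfolding X'_def using Xm that by simp
    thus ?thesis using \<iota>nz[OF that] by blast
  next
    case False
    hence "X' k \<subseteq> Y (R kzero)" unfolding X'_def using Xf by simp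
    thus ?thesis using Rnz by blast
  qed
  have YtF: "Yt i \<subseteq> {a. F a = (T \<circ> R) i}" for i
    using Yt(1)[rule_format, of i] Ys Rnz[of i] by auto
  have YtU: "Yt i \<subseteq> (\<Union>i\<in>{i. i \<noteq> kzero}. Y i)" for i
    using Yt(1)[rule_format, of i] Rnz[of i] by blast
  define Prod where "Prod = {xs @ ys | xs ys. length xs = e' \<and> (\<forall>k<e'. xs!k \<in> incr lss r (X' k)) \<and>
                 ys \<in> Fseqs lss F r (s - e') (\<Union>i\<in>{i. i \<noteq> kzero}. Yt i)}"
  have PS: "Prod \<subseteq> S" unfolding Prod_def
  proof (rule prodS[OF SP r e(2,3)])
    show "\<forall>k<e. X' k = X k" unfolding X'_def using e by auto
    show "\<forall>k. e \<le> k \<and> k < e' \<longrightarrow> X' k \<subseteq> (\<Union>i\<in>{i. i \<noteq> kzero}. Y i) \<and> X' k \<subseteq> {a. F a = beta' k}"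
      using X'U X'F by blast
    show "\<forall>k k'. e \<le> k \<and> k < k' \<and> k' < e' \<longrightarrow> beta' k < beta' k'" using betmono by blast
    show "\<forall>i. i \<noteq> kzero \<longrightarrow> Yt i \<subseteq> (\<Union>i\<in>{i. i \<noteq> kzero}. Y i) \<and> Yt i \<subseteq> {a. F a = (T \<circ> R) i}"
      using YtU YtF by blast
    show "\<forall>i. i \<noteq> kzero \<longrightarrow> beta' (e' - 1) < (T \<circ> R) i"
      using betl Rgt Tm by (simp add: strict_mono_less)
  qed
  have injTR: "inj_on (T \<circ> R) {i. i \<noteq> kzero}"
    by (rule strict_mono_imp_inj_on[OF strict_mono_o[OF Tm R(1)]])
  have HOLDS: "\<forall>\<sigma>\<in>set \<sigma>s. holds fI lss a \<sigma>" if aP: "a \<in> Prod" for a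
  proof
    fix \<sigma> assume \<sigma>: "\<sigma> \<in> set \<sigma>s"
    have g: "goodsig ar r s e' \<sigma>" using sig \<sigma> by blast
    note sp = sent_pos[OF g]
    obtain idx where idx: "idx < length \<sigma>s" "\<sigma>s!idx = \<sigma>" using in_set_conv_nth[THEN iffD1, OF \<sigma>] by (elim exE conjE)
    obtain xs ys where a: "a = xs @ ys" and lx: "length xs = e'" and xk: "\<forall>k<e'. xs!k \<in> incr lss r (X' k)"
      and ys: "ys \<in> Fseqs lss F r (s - e') (\<Union>i\<in>{i. i \<noteq> kzero}. Yt i)"
      using aP unfolding Prod_def by blast
    have ly: "length ys = s - e'" and ysb: "\<forall>b\<in>set ys. b \<in> incr lss r (\<Union>i\<in>{i. i \<noteq> kzero}. Yt i)"
      using ys unfolding Fseqs_def by auto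
    have la: "length a = s" using a lx ly e by simp
    have lb: "\<forall>k<s. length (a!k) = r"
    proof (intro allI impI)
      fix k assume k: "k < s"
      show "length (a!k) = r"
      proof (cases "k < e'")
        case True thus ?thesis using xk a lx unfolding incr_def by (simp add: nth_append)
      next
        case False
        hence "a!k = ys!(k-e')" using a lx by (simp add: nth_append)
        moreover have "ys!(k-e') \<in> set ys" using False k ly by simp
        ultimately show ?thesis using ysb unfolding incr_def by auto
      qed
    qed
    let ?p = "take (e'-1) a"
    have pe: "?p = take (e'-1) xs" using a lx by simp
    have pP: "?p \<in> P" unfolding Pdef
    proof (rule CollectI, intro conjI allI impI)
      show "length ?p = e'-1" using la e by simp
      fix k assume k: "k < e'-1"
      have "?p!k = xs!k" using pe k by simp
      moreover have "xs!k \<in> incr lss r (X' k)" using xk k by simp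
      moreover have "X' k = (if k < e then X k else Xmid k)" unfolding X'_def using k by simp
      ultimately show "?p!k \<in> incr lss r (if k < e then X k else Xmid k)" by simp
    qed
    have bX: "a!(e'-1) \<in> incr lss r Xf"
    proof -
      have "a!(e'-1) = xs!(e'-1)" using a lx e by (simp add: nth_append)
      moreover have "xs!(e'-1) \<in> incr lss r (X' (e'-1))" using xk e by simp
      moreover have "X' (e'-1) = Xf" unfolding X'_def by simp
      ultimately show ?thesis by simp
    qed
    have "\<exists>H2. HCg cl H2 \<gamma>s \<and> a!(us \<sigma> - 1) \<in> incr lss r H2"
    proof (cases "us \<sigma> = e'")
      case True thus ?thesis using hc(1) bX by auto
    next
      case False
      hence u: "e' \<le> us \<sigma> - 1" "us \<sigma> - 1 < s" using sp(6,7) e by auto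
      hence "a!(us \<sigma> - 1) = ys!(us \<sigma> - 1 - e')" using a lx by (simp add: nth_append)
      moreover have "ys!(us \<sigma> - 1 - e') \<in> set ys" using u ly by simp
      ultimately have "a!(us \<sigma> - 1) \<in> set ys" by simp
      then obtain i where "i \<in> {i. i \<noteq> kzero}" "a!(us \<sigma> - 1) \<in> incr lss r (Yt i)"
        using Fseqs_block[OF ys _ r _ injTR] YtF by blast
      thus ?thesis using hc(2) by blast
    qed
    then obtain H2 where H2: "HCg cl H2 \<gamma>s" "a!(us \<sigma> - 1) \<in> incr lss r H2" by blast
    have "lss (Gs fI \<sigma> ?p (map (nth (a!(e'-1))) (Js \<sigma>))) (cvs e' \<sigma> ?p) \<longrightarrow>
         Gs fI \<sigma> ?p (map (nth (a!(e'-1))) (Js \<sigma>)) = Gs fI \<sigma> ?p (map (nth (a!(us \<sigma> - 1))) (Ls \<sigma>))"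
      by (rule hom_holds[OF irr trn g hc(1) H2(1) idx(1) idx(2)[symmetric] cldef pP bX H2(2)])
    thus "holds fI lss a \<sigma>" by (rule holds_from[OF g la lb])
  qed
  show ?thesis unfolding game_win_def
  proof (intro conjI)
    show "\<forall>k. Suc k < e' \<longrightarrow> beta' k < beta' (Suc k)" using betstep by simp
    show "beta' (e' - 1) = (T \<circ> R) kzero" using betl by simp
    show "strict_mono (T \<circ> R)" using strict_mono_o[OF Tm R(1)] .
    show "\<exists>X Y. (\<forall>k<e'. X k \<subseteq> {a. F a = beta' k} \<and> |X k| =o |{x::'k. x < mus' ! k}| ) \<and>
        (\<forall>i. i \<noteq> kzero \<longrightarrow> Y i \<subseteq> {a. F a = (T \<circ> R) i}) \<and>
        (\<forall>m. \<exists>i. i \<noteq> kzero \<and> |{x::'k. x < m}| \<le>o |Y i| ) \<and>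
        {xs @ ys |xs ys. length xs = e' \<and> (\<forall>k<e'. xs ! k \<in> incr lss r (X k)) \<and>
           ys \<in> Fseqs lss F r (s - e') (\<Union>i\<in>{i. i \<noteq> kzero}. Y i)} \<subseteq> {a \<in> S. \<forall>\<sigma>\<in>set \<sigma>s. holds fI lss a \<sigma>}"
    proof (rule exI[of _ X'], rule exI[of _ Yt], intro conjI)
      show "\<forall>k<e'. X' k \<subseteq> {a. F a = beta' k} \<and> |X' k| =o |{x::'k. x < mus' ! k}|" using X'F X'c by blast
      show "\<forall>i. i \<noteq> kzero \<longrightarrow> Yt i \<subseteq> {a. F a = (T \<circ> R) i}" using YtF by blast
      show "\<forall>m. \<exists>i. i \<noteq> kzero \<and> |{x::'k. x < m}| \<le>o |Yt i|" by (rule Yt(2))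
      show "{xs @ ys |xs ys. length xs = e' \<and> (\<forall>k<e'. xs ! k \<in> incr lss r (X' k)) \<and>
           ys \<in> Fseqs lss F r (s - e') (\<Union>i\<in>{i. i \<noteq> kzero}. Yt i)} \<subseteq> {a \<in> S. \<forall>\<sigma>\<in>set \<sigma>s. holds fI lss a \<sigma>}"
        using PS HOLDS unfolding Prod_def by blast
    qed
  qed
qed

end


lemma cvs_eq: "cvs e' \<sigma> p = aval p (e'-1, cj \<sigma>)"
  by (cases \<sigma>) (auto simp: cvs_def cj_def)

context inacc begin

lemma small_opt_funs:
  assumes "small A" "small B"
  shows "small {f. \<forall>p. f p \<noteq> None \<longrightarrow> p \<in> A \<and> the (f p) \<in> B}" (is "small ?C")
proof -
  let ?\<Phi> = "\<lambda>f. {(p,v). f p = Some v}"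
  have "|?C| \<le>o |Pow (A \<times> B)|"
  proof (rule card_of_ordLeqI[of ?\<Phi>])
    show "inj_on ?\<Phi> ?C"
    proof (rule inj_onI)
      fix f g assume eq: "?\<Phi> f = ?\<Phi> g"
      show "f = g"
      proof
        fix T show "f T = g T"
        proof (cases "f T")
          case None
          show ?thesis
          proof (cases "g T")
            case (Some w)
            hence "(T,w) \<in> ?\<Phi> f" using eq by auto
            thus ?thesis using None by auto
          qed (simp add: None)
        next
          case (Some v)
          hence "(T,v) \<in> ?\<Phi> g" using eq by auto
          thus ?thesis using Some by auto
        qed
      qed
    qed
    fix f assume f: "f \<in> ?C"
    show "?\<Phi> f \<in> Pow (A \<times> B)"
    proof (rule PowI, clarify)
      fix p v assume "f p = Some v"
      thus "p \<in> A \<and> v \<in> B" using f by force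
    qed
  qed
  moreover have "small (Pow (A \<times> B))" by (intro small_Pow small_Times assms)
  ultimately show ?thesis by (rule small_le)
qed

end

context mctx begin

lemma small_level: "X \<subseteq> {a. F a = \<beta>} \<Longrightarrow> small X"
proof -
  assume X: "X \<subseteq> {a. F a = \<beta>}"
  have "X \<subseteq> Lv \<beta>" using X memL by force
  thus "small X" using smallL by (meson small_subset)
qed

theorem main:
  assumes S: "superlarge lss F r s e S" and r: "0 < r" and e: "1 \<le> e" "e < e'" "e' \<le> s"
    and sig: "\<forall>\<sigma>\<in>set \<sigma>s. goodsig ar r s e' \<sigma>"
  shows "\<exists>S'\<subseteq>S. superlarge lss F r s e' S' \<and> (\<forall>a\<in>S'. \<forall>\<sigma>\<in>set \<sigma>s. holds fI lss a \<sigma>)"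
proof -
  define S' where "S' = {a\<in>S. \<forall>\<sigma>\<in>set \<sigma>s. holds fI lss a \<sigma>}"
  have SF: "S \<subseteq> Fseqs lss F r s UNIV" using S unfolding superlarge_def by blast
  have "II_wins lss F r s e S" using S unfolding superlarge_def by blast
  then obtain st fin where SW: "\<forall>mus. length mus = e \<longrightarrow>
        game_win lss F r s e S mus
          (\<lambda>k. if Suc k < e then st (take (Suc k) mus) else fin mus kzero) (fin mus)"
    unfolding II_wins_def by blast
  define Bt where "Bt = (\<lambda>mus k. if Suc k < e then st (take (Suc k) mus) else fin mus (kzero::'k))"
  define gwp where "gwp = (\<lambda>mus (X::nat \<Rightarrow> 'm set) (Y::'k \<Rightarrow> 'm set).
     (\<forall>k<e. X k \<subseteq> {a. F a = Bt mus k} \<and> |X k| =o |{x::'k. x < mus!k}| ) \<and>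
     (\<forall>i. i \<noteq> kzero \<longrightarrow> Y i \<subseteq> {a. F a = fin mus i}) \<and>
     (\<forall>m. \<exists>i. i \<noteq> kzero \<and> |{x::'k. x<m}| \<le>o |Y i| ) \<and>
     {xs @ ys |xs ys. length xs = e \<and> (\<forall>k<e. xs ! k \<in> incr lss r (X k)) \<and>
        ys \<in> Fseqs lss F r (s - e) (\<Union>i\<in>{i. i \<noteq> kzero}. Y i)} \<subseteq> S)"
  have gw: "(\<forall>k. Suc k < e \<longrightarrow> Bt mus k < Bt mus (Suc k)) \<and> strict_mono (fin mus) \<and> (\<exists>X Y. gwp mus X Y)"
    if "length mus = e" for mus
    using SW[rule_format, OF that] unfolding game_win_def gwp_def Bt_def by blast
  define XY where "XY = (\<lambda>mus. SOME p. gwp mus (fst p) (snd p))"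
  define Xs where "Xs = (\<lambda>mus. fst (XY mus))"
  define Yc where "Yc = (\<lambda>mus i. if i = (kzero::'k) then {} else snd (XY mus) i)"
  have gwX: "gwp mus (Xs mus) (snd (XY mus))" if lmus: "length mus = e" for mus
  proof -
    obtain X Y where "gwp mus X Y" using gw[OF lmus] by blast
    hence "gwp mus (fst (X,Y)) (snd (X,Y))" by simp
    hence "gwp mus (fst (XY mus)) (snd (XY mus))" unfolding XY_def by (rule someI)
    thus ?thesis unfolding Xs_def .
  qed
  have YcF: "\<forall>i. i \<noteq> kzero \<longrightarrow> Yc mus i \<subseteq> {a. F a = fin mus i}" if "length mus = e" for mus
    using gwX[OF that] unfolding gwp_def Yc_def by auto
  have Ycsmall: "\<forall>i. small (Yc mus i)" if "length mus = e" for mus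
  proof
    fix i show "small (Yc mus i)"
    proof (cases "i = kzero")
      case True thus ?thesis unfolding Yc_def by (simp add: small_finite)
    next
      case False thus ?thesis using YcF[OF that] small_level by blast
    qed
  qed
  have Ycsup: "\<forall>m. \<exists>i. |{x::'k. x<m}| \<le>o |Yc mus i|" if lmus: "length mus = e" for mus
  proof
    fix m :: 'k
    obtain i where "i \<noteq> kzero" "|{x::'k. x<m}| \<le>o |snd (XY mus) i|"
      using gwX[OF lmus] unfolding gwp_def by blast
    thus "\<exists>i. |{x::'k. x<m}| \<le>o |Yc mus i|" unfolding Yc_def by auto
  qed
  have unb: "\<forall>b \<mu>. \<exists>i. b < i \<and> |{x::'k. x<\<mu>}| \<le>o |Yc mus i|" if "length mus = e" for mus
    by (rule unbdd[OF Ycsmall[OF that] Ycsup[OF that]])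
  have YcU: "(\<Union>i\<in>{i. i \<noteq> kzero}. Yc mus i) = (\<Union>i\<in>{i. i \<noteq> kzero}. snd (XY mus) i)" for mus
    unfolding Yc_def by auto
  define nxt where "nxt = (\<lambda>mus b \<mu>. LEAST i. b < i \<and> |{x::'k. x<\<mu>}| \<le>o |Yc mus i| )"
  have nxt: "b < nxt mus b \<mu> \<and> |{x::'k. x<\<mu>}| \<le>o |Yc mus (nxt mus b \<mu>)|" if "length mus = e" for mus b \<mu>
  proof -
    have "\<exists>i. b < i \<and> |{x::'k. x<\<mu>}| \<le>o |Yc mus i|" using unb[OF that] by blast
    thus ?thesis unfolding nxt_def by (rule LeastI_ex)
  qed
  define \<iota>f where "\<iota>f = (\<lambda>mus ms. foldl (nxt mus) kzero ms)"
  define st' where "st' = (\<lambda>l. if length l < e then st l else fin (take e l) (\<iota>f (take e l) (drop e l)))"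
  define \<iota>k where "\<iota>k = (\<lambda>mus' k. \<iota>f (take e mus') (take (Suc k - e) (drop e mus')))"
  define Xmid where "Xmid = (\<lambda>mus' k. SOME Z. Z \<subseteq> Yc (take e mus') (\<iota>k mus' k) \<and> |Z| =o |{x::'k. x < mus'!k}| )"
  define Xpre where "Xpre = (\<lambda>mus' k. if k < e then Xs (take e mus') k else Xmid mus' k)"
  define Pf where "Pf = (\<lambda>mus'. {p. length p = e'-1 \<and> (\<forall>k<e'-1. p!k \<in> incr lss r (if k < e then Xs (take e mus') k else Xmid mus' k))})"
  define clf where "clf = (\<lambda>mus'. map (\<lambda>\<sigma>. (length (Js \<sigma>), colf fI lss e' (Pf mus') \<sigma>)) \<sigma>s)"
  define FP where "FP = (\<lambda>mus' (R::'k\<Rightarrow>'k). \<exists>Xf Yt \<gamma>s. strict_mono R \<and> \<iota>k mus' (e'-2) < R kzero \<and>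
     Xf \<subseteq> Yc (take e mus') (R kzero) \<and> |Xf| =o |{x::'k. x<mus'!(e'-1)}| \<and>
     (\<forall>i. Yt i \<subseteq> Yc (take e mus') (R i)) \<and>
     (\<forall>m. \<exists>i. i \<noteq> kzero \<and> card_of {x::'k. x<m} \<le>o card_of (Yt i)) \<and> HCg (clf mus') Xf \<gamma>s \<and> (\<forall>i. HCg (clf mus') (Yt i) \<gamma>s))"
  define Rf where "Rf = (\<lambda>mus'. SOME R. FP mus' R)"
  define fin' where "fin' = (\<lambda>mus'. fin (take e mus') \<circ> Rf mus')"
  have "II_wins lss F r s e' S'"
    unfolding II_wins_def
  proof (rule exI[of _ st'], rule exI[of _ fin'], intro allI impI)
    fix mus' :: "'k list" assume lm: "length mus' = e'"
    define mu where "mu = take e mus'"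
    have lmu: "length mu = e" unfolding mu_def using lm e by simp
    have gwmu: "gwp mu (Xs mu) (snd (XY mu))" by (rule gwX[OF lmu])
    have mun: "mu!k = mus'!k" if "k < e" for k unfolding mu_def using that by simp
    have stv: "st' (take (Suc k) mus') = (if Suc k < e then Bt mu k else fin mu (\<iota>k mus' k))"
      if "Suc k < e'" for k
    proof (cases "Suc k < e")
      case True
      have "take (Suc k) mu = take (Suc k) mus'" unfolding mu_def using True by (simp add: min_def)
      thus ?thesis unfolding st'_def Bt_def using True that lm by simp
    next
      case False
      have "take e (take (Suc k) mus') = mu" unfolding mu_def using False by (simp add: min_def)
      moreover have "drop e (take (Suc k) mus') = take (Suc k - e) (drop e mus')"
        by (simp add: drop_take)
      ultimately show ?thesis unfolding st'_def \<iota>k_def using False that lm by (simp add: mu_def)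
    qed
    have \<iota>0: "\<iota>k mus' (e-1) = kzero" unfolding \<iota>k_def \<iota>f_def using e by simp
    have \<iota>s: "\<iota>k mus' (k-1) < \<iota>k mus' k \<and> |{x::'k. x<mus'!k}| \<le>o |Yc mu (\<iota>k mus' k)|"
      if "e \<le> k" "k < e'" for k
    proof -
      have kl: "k - e < length (drop e mus')" using that lm by simp
      have "take (Suc k - e) (drop e mus') = take (k - e) (drop e mus') @ [drop e mus' ! (k - e)]"
        using take_Suc_conv_app_nth[OF kl] that by (simp add: Suc_diff_le)
      moreover have "drop e mus' ! (k - e) = mus'!k" using that lm by simp
      moreover have "Suc (k-1) - e = k - e" using that e by simp
      ultimately have "\<iota>k mus' k = nxt mu (\<iota>k mus' (k-1)) (mus'!k)"
        unfolding \<iota>k_def \<iota>f_def mu_def by simp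
      thus ?thesis using nxt[OF lmu] by simp
    qed
    have Xm: "Xmid mus' k \<subseteq> Yc mu (\<iota>k mus' k) \<and> |Xmid mus' k| =o |{x::'k. x < mus'!k}|"
      if "e \<le> k" "k < e'-1" for k
    proof -
      have "|{x::'k. x<mus'!k}| \<le>o |Yc mu (\<iota>k mus' k)|" using \<iota>s[of k] that by simp
      hence "\<exists>Z. Z \<subseteq> Yc mu (\<iota>k mus' k) \<and> |Z| =o |{x::'k. x < mus'!k}|" using exact_subset by blast
      thus ?thesis unfolding Xmid_def mu_def[symmetric] by (rule someI_ex)
    qed
    define W where "W = (\<Union>k\<in>{k. k < e'-1}. Xpre mus' k)"
    have sX: "small (Xpre mus' k)" if "k < e'-1" for k
    proof (cases "k < e")
      case True
      hence "Xpre mus' k \<subseteq> {a. F a = Bt mu k}" unfolding Xpre_def using gwmu unfolding gwp_def mu_def by simp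
      thus ?thesis by (rule small_level)
    next
      case False
      hence "Xpre mus' k \<subseteq> Yc mu (\<iota>k mus' k)" unfolding Xpre_def using Xm[of k] that by simp
      thus ?thesis using Ycsmall[OF lmu] small_subset by blast
    qed
    have sW: "small W" unfolding W_def by (rule small_UN) (auto intro: small_finite sX)
    define V where "V = (\<Union>x\<in>W. Lv (F x))"
    have sV: "small V" unfolding V_def using sW smallL by (intro small_UN) auto
    have PW: "Pf mus' \<subseteq> {ps. length ps = e'-1 \<and> set ps \<subseteq> {xs. length xs = r \<and> set xs \<subseteq> W}}"
    proof
      fix p assume p: "p \<in> Pf mus'"
      show "p \<in> {ps. length ps = e'-1 \<and> set ps \<subseteq> {xs. length xs = r \<and> set xs \<subseteq> W}}"
      proof (rule CollectI, intro conjI subsetI)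
        show "length p = e'-1" using p unfolding Pf_def by simp
        fix b assume "b \<in> set p"
        then obtain k where k: "k < length p" "p!k = b" by (auto simp: in_set_conv_nth)
        have "k < e'-1" using k p unfolding Pf_def by simp
        hence "b \<in> incr lss r (Xpre mus' k)" using p k unfolding Pf_def Xpre_def by auto
        thus "b \<in> {xs. length xs = r \<and> set xs \<subseteq> W}" unfolding incr_def W_def using \<open>k < e'-1\<close> by auto
      qed
    qed
    have sP: "small (Pf mus')" using PW small_lists[OF small_lists[OF sW]] by (rule small_subset)
    define CS where "CS = {f::'m list list \<Rightarrow> 'm option. \<forall>p. f p \<noteq> None \<longrightarrow> p \<in> Pf mus' \<and> the (f p) \<in> V}"
    have sCS: "small CS" unfolding CS_def by (rule small_opt_funs[OF sP sV])
    have rg: "\<forall>mc\<in>set (clf mus'). range (snd mc) \<subseteq> CS"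
    proof
      fix mc assume "mc \<in> set (clf mus')"
      then obtain \<sigma> where \<sigma>: "\<sigma> \<in> set \<sigma>s" "mc = (length (Js \<sigma>), colf fI lss e' (Pf mus') \<sigma>)"
        unfolding clf_def by auto
      note sp = sent_pos[OF sig[rule_format, OF \<sigma>(1)]]
      show "range (snd mc) \<subseteq> CS"
      proof (clarsimp simp: \<sigma>(2) CS_def)
        fix z p y assume y: "colf fI lss e' (Pf mus') \<sigma> z p = Some y"
        hence pP: "p \<in> Pf mus'" and lt: "lss y (cvs e' \<sigma> p)"
          unfolding colf_def by (auto split: if_splits)
        have "e'-2 < e'-1" using e by simp
        hence "p!(e'-2) \<in> incr lss r (Xpre mus' (e'-2))" using pP unfolding Pf_def Xpre_def by auto
        hence bl: "length (p!(e'-2)) = r" "set (p!(e'-2)) \<subseteq> Xpre mus' (e'-2)" unfolding incr_def by auto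
        have "cvs e' \<sigma> p = p!(e'-2)!(cj \<sigma> - 1)" unfolding cvs_eq aval_def by (simp add: numeral_2_eq_2)
        moreover have "cj \<sigma> - 1 < r" using sp(8,9) by simp
        ultimately have "cvs e' \<sigma> p \<in> Xpre mus' (e'-2)" using bl by auto
        hence "cvs e' \<sigma> p \<in> W" unfolding W_def using \<open>e'-2 < e'-1\<close> by blast
        moreover have "y \<in> Lv (F (cvs e' \<sigma> p))" using below lt by blast
        ultimately show "p \<in> Pf mus' \<and> y \<in> V" using pP unfolding V_def by blast
      qed
    qed
    obtain R0 :: "'k \<Rightarrow> 'k" and Xf0 Yt0 \<gamma>s0 where "strict_mono R0 \<and> \<iota>k mus' (e'-2) < R0 kzero \<and> Xf0 \<subseteq> Yc mu (R0 kzero) \<and>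
     |Xf0| =o |{x::'k. x<mus'!(e'-1)}| \<and> (\<forall>i. Yt0 i \<subseteq> Yc mu (R0 i)) \<and>
     (\<forall>m. \<exists>i. i \<noteq> kzero \<and> card_of {x::'k. x<m} \<le>o card_of (Yt0 i)) \<and> HCg (clf mus') Xf0 \<gamma>s0 \<and> (\<forall>i. HCg (clf mus') (Yt0 i) \<gamma>s0)"
      using final_step[OF unb[OF lmu] sCS rg, of "\<iota>k mus' (e'-2)" "mus'!(e'-1)"] by (elim exE)
    hence "FP mus' R0" unfolding FP_def mu_def by blast
    hence "FP mus' (Rf mus')" unfolding Rf_def by (rule someI[of "FP mus'"])
    then obtain Xf Yt \<gamma>s where FPR: "strict_mono (Rf mus')" "\<iota>k mus' (e'-2) < Rf mus' kzero"
      "Xf \<subseteq> Yc mu (Rf mus' kzero)" "|Xf| =o |{x::'k. x<mus'!(e'-1)}|"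
      "\<forall>i. Yt i \<subseteq> Yc mu (Rf mus' i)"
      "\<forall>m. \<exists>i. i \<noteq> kzero \<and> |{x::'k. x<m}| \<le>o |Yt i|" "HCg (clf mus') Xf \<gamma>s" "\<forall>i. HCg (clf mus') (Yt i) \<gamma>s"
      unfolding FP_def mu_def by blast
    show "game_win lss F r s e' S' mus'
          (\<lambda>k. if Suc k < e' then st' (take (Suc k) mus') else fin' mus' kzero) (fin' mus')"
      unfolding S'_def fin'_def mu_def[symmetric]
    proof (rule one_play[where Bt = "Bt mu" and X = "Xs mu" and Y = "Yc mu" and \<iota>k = "\<iota>k mus'"
          and Xmid = "Xmid mus'" and P = "Pf mus'" and cl = "clf mus'"])
      show "0 < r" "1 \<le> e" "e < e'" "e' \<le> s" "length mus' = e'" using r e lm by auto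
      show "\<forall>\<sigma>\<in>set \<sigma>s. goodsig ar r s e' \<sigma>" by (rule sig)
      show "\<forall>k. Suc k < e \<longrightarrow> Bt mu k < Bt mu (Suc k)" using gw[OF lmu] by blast
      show "Bt mu (e - 1) = fin mu kzero" unfolding Bt_def using e by simp
      show "strict_mono (fin mu)" using gw[OF lmu] by blast
      show "\<forall>k<e. Xs mu k \<subseteq> {a. F a = Bt mu k} \<and> |Xs mu k| =o |{x::'k. x < mus' ! k}|"
        using gwmu mun unfolding gwp_def by simp
      show "\<forall>i. i \<noteq> kzero \<longrightarrow> Yc mu i \<subseteq> {a. F a = fin mu i}" by (rule YcF[OF lmu])
      show "{xs @ ys |xs ys. length xs = e \<and> (\<forall>k<e. xs ! k \<in> incr lss r (Xs mu k)) \<and>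
          ys \<in> Fseqs lss F r (s - e) (\<Union>i\<in>{i. i \<noteq> kzero}. Yc mu i)} \<subseteq> S"
        using gwmu unfolding gwp_def YcU by blast
      show "\<iota>k mus' (e - 1) = kzero" by (rule \<iota>0)
      show "\<forall>k. e \<le> k \<and> k < e' \<longrightarrow> \<iota>k mus' (k - 1) < \<iota>k mus' k" using \<iota>s by blast
      show "\<forall>k. e \<le> k \<and> k < e' - 1 \<longrightarrow> Xmid mus' k \<subseteq> Yc mu (\<iota>k mus' k) \<and>
          |Xmid mus' k| =o |{x::'k. x < mus' ! k}|" using Xm by blast
      show "Pf mus' = {p. length p = e' - 1 \<and> (\<forall>k<e' - 1. p ! k \<in> incr lss r (if k < e then Xs mu k else Xmid mus' k))}"
        unfolding Pf_def mu_def ..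
      show "clf mus' = map (\<lambda>\<sigma>. (length (Js \<sigma>), colf fI lss e' (Pf mus') \<sigma>)) \<sigma>s" unfolding clf_def ..
      show "strict_mono (Rf mus')" "\<iota>k mus' (e' - 2) < Rf mus' kzero" using FPR by blast+
      show "Xf \<subseteq> Yc mu (Rf mus' kzero)" "|Xf| =o |{x::'k. x < mus' ! (e' - 1)}|" using FPR by blast+
      show "\<forall>i. Yt i \<subseteq> Yc mu (Rf mus' i)" "\<forall>m. \<exists>i. i \<noteq> kzero \<and> |{x::'k. x < m}| \<le>o |Yt i|"
        using FPR by blast+
      show "HCg (clf mus') Xf \<gamma>s" "\<forall>i. HCg (clf mus') (Yt i) \<gamma>s" using FPR by blast+
      show "\<forall>k. (if Suc k < e' then st' (take (Suc k) mus') else (fin mu \<circ> Rf mus') kzero) =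
          (if Suc k < e' then if Suc k < e then Bt mu k else fin mu (\<iota>k mus' k) else fin mu (Rf mus' kzero))"
        using stv by simp
    qed
  qed
  moreover have "S' \<subseteq> Fseqs lss F r s UNIV" using SF unfolding S'_def by blast
  ultimately have "superlarge lss F r s e' S'" unfolding superlarge_def using e by simp
  moreover have "S' \<subseteq> S" unfolding S'_def by blast
  moreover have "\<forall>a\<in>S'. \<forall>\<sigma>\<in>set \<sigma>s. holds fI lss a \<sigma>" unfolding S'_def by blast
  ultimately show ?thesis by blast
qed

end


theorem proposition3p5:
  fixes ar :: "'f \<Rightarrow> nat" and par :: "'p \<Rightarrow> nat" and isL :: "'f \<Rightarrow> bool"
    and sk :: "('f,'p) fm \<Rightarrow> nat \<Rightarrow> 'f" and lt :: 'p
    and fI :: "'f \<Rightarrow> 'm list \<Rightarrow> 'm" and pI :: "'p \<Rightarrow> 'm list \<Rightarrow> bool"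
    and Mi :: "'k::wellorder \<Rightarrow> 'm set"
    and r s e e' :: nat and S :: "'m list list set" and \<sigma>s :: "'f sent list"
  assumes setting: "setting ar par isL sk lt fI pI Mi"
    and r: "0 < r" and s: "0 < s" and e: "1 \<le> e" "e < s"
    and S: "superlarge (lessM pI lt) (Fk Mi) r s e S"
    and nonempty: "\<sigma>s \<noteq> []"
    and sig: "\<forall>\<sigma>\<in>set \<sigma>s. is_sigma ar \<sigma> \<and> iota \<sigma> = e' \<and>
                (\<forall>c\<in>sconsts \<sigma>. 1 \<le> fst c \<and> fst c \<le> s \<and> 1 \<le> snd c \<and> snd c \<le> r)"
    and e': "e < e'"
  shows "\<exists>S'\<subseteq>S. superlarge (lessM pI lt) (Fk Mi) r s e' S' \<and>
           (\<forall>a\<in>S'. \<forall>\<sigma>\<in>set \<sigma>s. holds fI (lessM pI lt) a \<sigma>)"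
proof -
  note st = setting[unfolded setting_def]
  have inac: "theta_inaccessible TYPE('k)" by (insert st, elim conjE, assumption)
  have irr: "\<forall>x. \<not> lessM pI lt x x" by (insert st, elim conjE, assumption)
  have trn0: "\<forall>a b c. lessM pI lt a b \<and> lessM pI lt b c \<longrightarrow> lessM pI lt a c" by (insert st, elim conjE, assumption)
  have trn: "\<forall>x y z. lessM pI lt x y \<longrightarrow> lessM pI lt y z \<longrightarrow> lessM pI lt x z" using trn0 by blast
  have dc: "\<forall>I. I \<noteq> UNIV \<and> downclosed (lessM pI lt) I \<longrightarrow> |I| <o |UNIV::'k set|" by (insert st, elim conjE, assumption)
  have Mi1: "\<forall>i. Mi i \<noteq> UNIV \<and> downclosed (lessM pI lt) (Mi i)" by (insert st, elim conjE, assumption)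
  have Mu: "(\<Union>i. Mi i) = UNIV" by (insert st, elim conjE, assumption)
  have memL: "\<forall>a. a \<in> Mi (Fk Mi a)"
  proof
    fix a
    have "a \<in> (\<Union>i. Mi i)" using Mu by simp
    hence "\<exists>i. a \<in> Mi i" by blast
    thus "a \<in> Mi (Fk Mi a)" unfolding Fk_def by (rule LeastI_ex)
  qed
  interpret mctx "TYPE('k)" "lessM pI lt" "Fk Mi" Mi
  proof (unfold_locales)
    show "theta_inaccessible TYPE('k)" by (rule inac)
    show "\<forall>x. \<not> lessM pI lt x x" by (rule irr)
    show "\<forall>x y z. lessM pI lt x y \<longrightarrow> lessM pI lt y z \<longrightarrow> lessM pI lt x z" by (rule trn)
    show "\<forall>i. smallk TYPE('k) (Mi i)" unfolding smallk_def
    proof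
      fix i show "|Mi i| <o |UNIV::'k set|" using dc[rule_format, OF Mi1[rule_format, of i]] .
    qed
    show "\<forall>a. a \<in> Mi (Fk Mi a)" by (rule memL)
    show "\<forall>v c. lessM pI lt v c \<longrightarrow> v \<in> Mi (Fk Mi c)"
    proof (intro allI impI)
      fix v c assume "lessM pI lt v c"
      moreover have "c \<in> Mi (Fk Mi c)" using memL by blast
      ultimately show "v \<in> Mi (Fk Mi c)" using Mi1 unfolding downclosed_def by blast
    qed
  qed
  have g: "\<forall>\<sigma>\<in>set \<sigma>s. goodsig ar r s e' \<sigma>" using sig unfolding goodsig_def by blast
  have "hd \<sigma>s \<in> set \<sigma>s" using nonempty by (rule hd_in_set)
  then obtain \<sigma> where \<sigma>: "\<sigma> \<in> set \<sigma>s" by blast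
  have es: "e' \<le> s" using sent_pos(6,7)[OF g[rule_format, OF \<sigma>]] by simp
  show ?thesis by (rule main[OF S r e(1) e' es g])
qed


end
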